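(* Let $\Omega_0\subset\mathbb{R}^3$ be a bounded domain (the reference configuration) and let $u(X,t)$ be a sufficiently smooth displacement field on $\Omega_0\times[t_0,t_e]$ with velocity $v=\partial u/\partial t$. Define the deformation gradient $F=I+\mathrm{Grad}(u)$, the Green strain $E=\tfrac12(F^T\cdot F-I)$, the second Piola–Kirchhoff stress $S=C:E$ with $C=2\mu\,\mathcal{I}_s+\lambda\, I\otimes I$ (St. Venant–Kirchhoff material, Lamé constants $\mu,\lambda$), and the linear momentum $p=\rho_0 v$ with constant density $\rho_0>0$. Suppose the local balance of linear momentum without body forces holds: $\rho_0\dot v=\mathrm{Div}(F\cdot S)$ in $\Omega_0$. Let $$H(p,E)=\frac12\int_{\Omega_0}\Big(\frac{1}{\rho_0}\,p\cdot p+E:C:E\Big)\,d\Omega_0 ,$$ regarded as a functional of $(p,E,F)$ not depending explicitly on $F$, so that its variational derivatives are $\frac{\delta H}{\delta p}=v$, $\frac{\delta H}{\delta E}=C:E=S$, $\frac{\delta H}{\delta F}=0$. Then $(p,E,F)$ satisfy $$\begin{bmatrix}\dot p\\ \dot E\\ \dot F\end{bmatrix}=\mathcal{J}(F)\begin{bmatrix}\frac{\delta H}{\delta p}\\ \frac{\delta H}{\delta E}\\ \frac{\delta H}{\delta F}\end{bmatrix},\qquad \mathcal{J}(F)=\begin{bmatrix}0&\mathrm{Div}(F\cdot\,\times\,)&\mathrm{Div}(\times)\\ a(F,\times)&0&0\\ \mathrm{Grad}(\times)&0&0\end{bmatrix},$$ where $a(F,w)=\tfrac12\big(F^T\cdot\mathrm{Grad}(w)+\mathrm{Grad}(w)^T\cdot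 F\big)$, and the operator $\mathcal{J}(F)$ (acting on triples consisting of a vector field, a symmetric second-order tensor field and a second-order tensor field) is formally skew-adjoint with respect to the $L^2(\Omega_0)$ pairing.
   Context: Tensor conventions in Cartesian index notation with summation over repeated indices: $(A\cdot B)_{ij}=A_{ik}B_{kj}$, $A:B=A_{ij}B_{ij}$, $\mathrm{Grad}(w)_{ij}=\partial w_i/\partial X_j$, $\mathrm{Div}(A)_i=\partial A_{ij}/\partial X_j$; all derivatives are with respect to the material coordinate $X\in\Omega_0$. $I$ is the second-order identity, $\mathcal{I}_s$ the symmetric fourth-order identity tensor, and $(I\otimes I)_{ijkl}=\delta_{ij}\delta_{kl}$. A dot over a quantity denotes its time derivative. "Formally skew-adjoint" means $\langle \mathbf{w},\mathcal{J}(F)\mathbf{z}\rangle_{L^2}=-\langle \mathcal{J}(F)\mathbf{w},\mathbf{z}\rangle_{L^2}$ for all smooth, compactly supported triples $\mathbf{w},\mathbf{z}$ (vector field, symmetric tensor field, tensor field), the pairing being the sum of the integrals of the componentwise inner products ($\cdot$ for vectors, $:$ for tensors). *)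

theory Defs
  imports "HOL-Analysis.Analysis"
begin

type_synonym vec3 = "real^3"
type_synonym ten3 = "real^3^3"

definition dd :: "('a::real_normed_vector \<Rightarrow> 'b::real_normed_vector) \<Rightarrow> 'a \<Rightarrow> 'a \<Rightarrow> 'b" where
  "dd f h x = vector_derivative (\<lambda>s. f (x + s *\<^sub>R h)) (at 0)"

fun dirs :: "'a::real_normed_vector list \<Rightarrow> ('a \<Rightarrow> 'b::real_normed_vector) \<Rightarrow> 'a \<Rightarrow> 'b" where
  "dirs [] f = f"
| "dirs (h # hs) f = dd (dirs hs f) h"

definition smooth_on :: "'a::real_normed_vector set \<Rightarrow> ('a \<Rightarrow> 'b::real_normed_vector) \<Rightarrow> bool" where
  "smooth_on S f \<longleftrightarrow> open S \<and>
     (\<forall>hs. continuous_on S (dirs hs f) \<and>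
        (\<forall>x\<in>S. \<forall>h. (\<lambda>s. dirs hs f (x + s *\<^sub>R h)) differentiable (at 0)))"

definition pd :: "(vec3 \<Rightarrow> 'b::real_normed_vector) \<Rightarrow> vec3 \<Rightarrow> 3 \<Rightarrow> 'b" where
  "pd f X j = dd f (axis j 1) X"

definition Grad :: "(vec3 \<Rightarrow> vec3) \<Rightarrow> vec3 \<Rightarrow> ten3" where
  "Grad w X = (\<chi> i j. pd w X j $ i)"

definition Div :: "(vec3 \<Rightarrow> ten3) \<Rightarrow> vec3 \<Rightarrow> vec3" where
  "Div A X = (\<chi> i. \<Sum>j\<in>UNIV. pd A X j $ i $ j)"

definition ddot :: "ten3 \<Rightarrow> ten3 \<Rightarrow> real" where
  "ddot A B = (\<Sum>i\<in>UNIV. \<Sum>j\<in>UNIV. A $ i $ j * B $ i $ j)"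

text \<open>C : A for C = 2 mu I_s + lambda I (x) I, where I_s : A = (A + A^T)/2.\<close>
definition elast :: "real \<Rightarrow> real \<Rightarrow> ten3 \<Rightarrow> ten3" where
  "elast mu lam A = (2 * mu) *\<^sub>R ((1/2) *\<^sub>R (A + transpose A)) + (lam * trace A) *\<^sub>R mat 1"

definition tder :: "(real \<Rightarrow> 'b::real_normed_vector) \<Rightarrow> real \<Rightarrow> 'b" where
  "tder f t = vector_derivative f (at t)"

definition vel :: "(vec3 \<Rightarrow> real \<Rightarrow> vec3) \<Rightarrow> vec3 \<Rightarrow> real \<Rightarrow> vec3" where
  "vel u X t = tder (\<lambda>s. u X s) t"

definition defgrad :: "(vec3 \<Rightarrow> real \<Rightarrow> vec3) \<Rightarrow> vec3 \<Rightarrow> real \<Rightarrow> ten3" where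
  "defgrad u X t = mat 1 + Grad (\<lambda>Y. u Y t) X"

definition green :: "(vec3 \<Rightarrow> real \<Rightarrow> vec3) \<Rightarrow> vec3 \<Rightarrow> real \<Rightarrow> ten3" where
  "green u X t = (1/2) *\<^sub>R (transpose (defgrad u X t) ** defgrad u X t - mat 1)"

definition PK2 :: "real \<Rightarrow> real \<Rightarrow> (vec3 \<Rightarrow> real \<Rightarrow> vec3) \<Rightarrow> vec3 \<Rightarrow> real \<Rightarrow> ten3" where
  "PK2 mu lam u X t = elast mu lam (green u X t)"

definition mom :: "real \<Rightarrow> (vec3 \<Rightarrow> real \<Rightarrow> vec3) \<Rightarrow> vec3 \<Rightarrow> real \<Rightarrow> vec3" where
  "mom rho0 u X t = rho0 *\<^sub>R vel u X t"

definition Ham :: "real \<Rightarrow> real \<Rightarrow> real \<Rightarrow> vec3 set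
    \<Rightarrow> (vec3 \<Rightarrow> vec3) \<Rightarrow> (vec3 \<Rightarrow> ten3) \<Rightarrow> (vec3 \<Rightarrow> ten3) \<Rightarrow> real" where
  "Ham rho0 mu lam \<Omega> p E F =
     (1/2) * integral \<Omega> (\<lambda>X. (1/rho0) * (p X \<bullet> p X) + ddot (E X) (elast mu lam (E X)))"

definition csupp :: "(vec3 \<Rightarrow> 'b::real_normed_vector) \<Rightarrow> vec3 set" where
  "csupp w = closure {X. w X \<noteq> 0}"

definition test_field :: "vec3 set \<Rightarrow> (vec3 \<Rightarrow> 'b::real_normed_vector) \<Rightarrow> bool" where
  "test_field \<Omega> w \<longleftrightarrow> smooth_on UNIV w \<and> compact (csupp w) \<and> csupp w \<subseteq> \<Omega>"

definition test_sym :: "vec3 set \<Rightarrow> (vec3 \<Rightarrow> ten3) \<Rightarrow> bool" where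
  "test_sym \<Omega> w \<longleftrightarrow> test_field \<Omega> w \<and> (\<forall>X. transpose (w X) = w X)"

text \<open>Variational derivatives of a functional of (p, E, F) (E ranging over symmetric fields),
  as the L2-representers of the Gateaux derivatives along smooth compactly supported variations.\<close>
definition is_vd_p :: "vec3 set \<Rightarrow> ((vec3 \<Rightarrow> vec3) \<Rightarrow> (vec3 \<Rightarrow> ten3) \<Rightarrow> (vec3 \<Rightarrow> ten3) \<Rightarrow> real)
    \<Rightarrow> (vec3 \<Rightarrow> vec3) \<Rightarrow> (vec3 \<Rightarrow> ten3) \<Rightarrow> (vec3 \<Rightarrow> ten3) \<Rightarrow> (vec3 \<Rightarrow> vec3) \<Rightarrow> bool" where
  "is_vd_p \<Omega> H p E F g \<longleftrightarrow> (\<forall>\<delta>. test_field \<Omega> \<delta> \<longrightarrow>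
     ((\<lambda>\<epsilon>. H (\<lambda>X. p X + \<epsilon> *\<^sub>R \<delta> X) E F) has_real_derivative
        integral \<Omega> (\<lambda>X. g X \<bullet> \<delta> X)) (at 0))"

definition is_vd_E :: "vec3 set \<Rightarrow> ((vec3 \<Rightarrow> vec3) \<Rightarrow> (vec3 \<Rightarrow> ten3) \<Rightarrow> (vec3 \<Rightarrow> ten3) \<Rightarrow> real)
    \<Rightarrow> (vec3 \<Rightarrow> vec3) \<Rightarrow> (vec3 \<Rightarrow> ten3) \<Rightarrow> (vec3 \<Rightarrow> ten3) \<Rightarrow> (vec3 \<Rightarrow> ten3) \<Rightarrow> bool" where
  "is_vd_E \<Omega> H p E F g \<longleftrightarrow> (\<forall>\<delta>. test_sym \<Omega> \<delta> \<longrightarrow>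
     ((\<lambda>\<epsilon>. H p (\<lambda>X. E X + \<epsilon> *\<^sub>R \<delta> X) F) has_real_derivative
        integral \<Omega> (\<lambda>X. ddot (g X) (\<delta> X))) (at 0))"

definition is_vd_F :: "vec3 set \<Rightarrow> ((vec3 \<Rightarrow> vec3) \<Rightarrow> (vec3 \<Rightarrow> ten3) \<Rightarrow> (vec3 \<Rightarrow> ten3) \<Rightarrow> real)
    \<Rightarrow> (vec3 \<Rightarrow> vec3) \<Rightarrow> (vec3 \<Rightarrow> ten3) \<Rightarrow> (vec3 \<Rightarrow> ten3) \<Rightarrow> (vec3 \<Rightarrow> ten3) \<Rightarrow> bool" where
  "is_vd_F \<Omega> H p E F g \<longleftrightarrow> (\<forall>\<delta>. test_field \<Omega> \<delta> \<longrightarrow>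
     ((\<lambda>\<epsilon>. H p E (\<lambda>X. F X + \<epsilon> *\<^sub>R \<delta> X)) has_real_derivative
        integral \<Omega> (\<lambda>X. ddot (g X) (\<delta> X))) (at 0))"

definition aop :: "(vec3 \<Rightarrow> ten3) \<Rightarrow> (vec3 \<Rightarrow> vec3) \<Rightarrow> vec3 \<Rightarrow> ten3" where
  "aop F w X = (1/2) *\<^sub>R (transpose (F X) ** Grad w X + transpose (Grad w X) ** F X)"

type_synonym triple = "(vec3 \<Rightarrow> vec3) \<times> (vec3 \<Rightarrow> ten3) \<times> (vec3 \<Rightarrow> ten3)"

definition Jop :: "(vec3 \<Rightarrow> ten3) \<Rightarrow> triple \<Rightarrow> triple" where
  "Jop F w = (case w of (w1, w2, w3) \<Rightarrow>
     (\<lambda>X. Div (\<lambda>Y. F Y ** w2 Y) X + Div w3 X, aop F w1, Grad w1))"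

definition evalT :: "triple \<Rightarrow> vec3 \<Rightarrow> vec3 \<times> ten3 \<times> ten3" where
  "evalT w X = (case w of (w1, w2, w3) \<Rightarrow> (w1 X, w2 X, w3 X))"

definition pairing :: "vec3 set \<Rightarrow> triple \<Rightarrow> triple \<Rightarrow> real" where
  "pairing \<Omega> w z = (case w of (w1, w2, w3) \<Rightarrow> case z of (z1, z2, z3) \<Rightarrow>
     integral \<Omega> (\<lambda>X. w1 X \<bullet> z1 X + ddot (w2 X) (z2 X) + ddot (w3 X) (z3 X)))"

definition test_triple :: "vec3 set \<Rightarrow> triple \<Rightarrow> bool" where
  "test_triple \<Omega> w \<longleftrightarrow> (case w of (w1, w2, w3) \<Rightarrow>
     test_field \<Omega> w1 \<and> test_sym \<Omega> w2 \<and> test_field \<Omega> w3)"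

definition formally_skew_adjoint :: "vec3 set \<Rightarrow> (triple \<Rightarrow> triple) \<Rightarrow> bool" where
  "formally_skew_adjoint \<Omega> J \<longleftrightarrow> (\<forall>w z. test_triple \<Omega> w \<and> test_triple \<Omega> z \<longrightarrow>
     pairing \<Omega> w (J z) = - pairing \<Omega> (J w) z)"

end

theory Submission
  imports Defs
begin


lemma hvd_vec:
  fixes f :: "real \<Rightarrow> 'a::real_normed_vector^'n"
  assumes "\<And>i. ((\<lambda>s. f s $ i) has_vector_derivative (f' $ i)) (at x within S)"
  shows "(f has_vector_derivative f') (at x within S)"
proof -
  have "((\<lambda>y. (1 / norm (y - x)) *\<^sub>R (f y $ i - (f x $ i + (y - x) *\<^sub>R f' $ i))) \<longlongrightarrow> 0) (at x within S)" for i
    using assms[of i] unfolding has_vector_derivative_def has_derivative_within by auto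
  then have "((\<lambda>y. (1 / norm (y - x)) *\<^sub>R (f y - (f x + (y - x) *\<^sub>R f'))) \<longlongrightarrow> 0) (at x within S)"
    by (intro vec_tendstoI) simp
  then show ?thesis unfolding has_vector_derivative_def has_derivative_within
    by (simp add: bounded_linear_scaleR_left)
qed

lemma hvd_nth:
  fixes f :: "real \<Rightarrow> 'a::real_normed_vector^'n"
  assumes "(f has_vector_derivative f') F"
  shows "((\<lambda>s. f s $ i) has_vector_derivative (f' $ i)) F"
proof -
  have "((\<lambda>s. f s $ i) has_derivative (\<lambda>h. (h *\<^sub>R f') $ i)) F"
    using bounded_linear.has_derivative[OF bounded_linear_vec_nth assms[unfolded has_vector_derivative_def]] .
  then show ?thesis unfolding has_vector_derivative_def by simp
qed

lemma hvd_nth_real: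
  fixes f :: "real \<Rightarrow> real^'n"
  assumes "(f has_vector_derivative f') F"
  shows "((\<lambda>s. f s $ i) has_real_derivative (f' $ i)) F"
  using hvd_nth[OF assms] by (simp add: has_real_derivative_iff_has_vector_derivative)

lemma hvd_mat_lambda:
  fixes g :: "'n::finite \<Rightarrow> 'm::finite \<Rightarrow> real \<Rightarrow> real"
  assumes "\<And>i j. (g i j has_real_derivative g' i j) (at x within S)"
  shows "((\<lambda>s. \<chi> i j. g i j s) has_vector_derivative (\<chi> i j. g' i j)) (at x within S)"
  by (rule hvd_vec, simp, rule hvd_vec, simp) (use assms in \<open>simp add: has_real_derivative_iff_has_vector_derivative\<close>)

lemma hvd_vec_lambda:
  fixes g :: "'n::finite \<Rightarrow> real \<Rightarrow> real"
  assumes "\<And>i. (g i has_real_derivative g' i) (at x within S)"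
  shows "((\<lambda>s. \<chi> i. g i s) has_vector_derivative (\<chi> i. g' i)) (at x within S)"
  by (rule hvd_vec, simp) (use assms in \<open>simp add: has_real_derivative_iff_has_vector_derivative\<close>)

lemma hvd_shift0:
  assumes "((\<lambda>s. f (t + s)) has_vector_derivative D) (at 0)"
  shows "(f has_vector_derivative D) (at t)"
proof -
  have "((\<lambda>s. f (t + s)) \<circ> (\<lambda>s. s - t) has_vector_derivative 1 *\<^sub>R D) (at t)"
    by (rule vector_diff_chain_at) (auto intro!: derivative_eq_intros assms)
  then show ?thesis by (simp add: o_def)
qed

lemma vd_congr:
  assumes "(f has_vector_derivative D) (at x)" "open S" "x \<in> S" "\<And>y. y \<in> S \<Longrightarrow> f y = g y"
  shows "vector_derivative g (at x) = D"
  using has_vector_derivative_transform_within_open[OF assms] vector_derivative_at by blast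



lemma deriv_line:
  fixes g :: "'a::real_normed_vector \<Rightarrow> real"
  assumes "((\<lambda>s. g ((y + s0 *\<^sub>R v) + s *\<^sub>R v)) has_real_derivative D) (at 0)"
  shows "((\<lambda>s. g (y + s *\<^sub>R v)) has_real_derivative D) (at s0)"
proof -
  have "((\<lambda>s. g (y + (s + s0) *\<^sub>R v)) has_real_derivative D) (at 0)"
    using assms by (simp add: scaleR_add_left algebra_simps)
  then show ?thesis using DERIV_shift[of "\<lambda>s. g (y + s *\<^sub>R v)" D 0 s0] by simp
qed

lemma mvt2d:
  fixes g gk ghk :: "'a::real_normed_vector \<Rightarrow> real"
  assumes dk: "\<And>y. y\<in>W \<Longrightarrow> ((\<lambda>s. g (y + s *\<^sub>R k)) has_real_derivative gk y) (at 0)"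
    and dkh: "\<And>y. y\<in>W \<Longrightarrow> ((\<lambda>s. gk (y + s *\<^sub>R h)) has_real_derivative ghk y) (at 0)"
    and a: "a > 0"
    and box: "\<And>\<sigma> \<tau>. 0 \<le> \<sigma> \<Longrightarrow> \<sigma> \<le> a \<Longrightarrow> 0 \<le> \<tau> \<Longrightarrow> \<tau> \<le> a \<Longrightarrow> x + \<sigma> *\<^sub>R h + \<tau> *\<^sub>R k \<in> W"
  shows "\<exists>\<sigma> \<tau>. 0 < \<sigma> \<and> \<sigma> < a \<and> 0 < \<tau> \<and> \<tau> < a \<and>
     g (x + a *\<^sub>R h + a *\<^sub>R k) - g (x + a *\<^sub>R k) - g (x + a *\<^sub>R h) + g x = a * a * ghk (x + \<sigma> *\<^sub>R h + \<tau> *\<^sub>R k)"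
proof -
  define \<phi> where "\<phi> s = g ((x + a *\<^sub>R h) + s *\<^sub>R k) - g (x + s *\<^sub>R k)" for s
  have dphi: "DERIV \<phi> s :> gk ((x + a *\<^sub>R h) + s *\<^sub>R k) - gk (x + s *\<^sub>R k)" if "0 \<le> s" "s \<le> a" for s
  proof -
    have i1: "(x + a *\<^sub>R h) + s *\<^sub>R k \<in> W" using box[of a s] that a by (simp add: add.assoc)
    have i2: "x + s *\<^sub>R k \<in> W" using box[of 0 s] that a by simp
    show ?thesis unfolding \<phi>_def
      by (rule DERIV_diff[OF deriv_line[OF dk[OF i1]] deriv_line[OF dk[OF i2]]])
  qed
  then obtain \<tau> where \<tau>: "0 < \<tau>" "\<tau> < a" "\<phi> a - \<phi> 0 = (a - 0) * (gk ((x + a *\<^sub>R h) + \<tau> *\<^sub>R k) - gk (x + \<tau> *\<^sub>R k))"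
    using MVT2[of 0 a \<phi> "\<lambda>s. gk ((x + a *\<^sub>R h) + s *\<^sub>R k) - gk (x + s *\<^sub>R k)", OF a dphi] by auto
  define \<psi> where "\<psi> s = gk ((x + \<tau> *\<^sub>R k) + s *\<^sub>R h)" for s
  have dpsi: "DERIV \<psi> s :> ghk ((x + \<tau> *\<^sub>R k) + s *\<^sub>R h)" if "0 \<le> s" "s \<le> a" for s
  proof -
    have i1: "(x + \<tau> *\<^sub>R k) + s *\<^sub>R h \<in> W" using box[of s \<tau>] that \<tau> by (simp add: algebra_simps)
    show ?thesis unfolding \<psi>_def
      by (rule deriv_line[OF dkh[OF i1]])
  qed
  then obtain \<sigma> where \<sigma>: "0 < \<sigma>" "\<sigma> < a" "\<psi> a - \<psi> 0 = (a - 0) * ghk ((x + \<tau> *\<^sub>R k) + \<sigma> *\<^sub>R h)"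
    using MVT2[of 0 a \<psi> "\<lambda>s. ghk ((x + \<tau> *\<^sub>R k) + s *\<^sub>R h)", OF a dpsi] by auto
  have "g (x + a *\<^sub>R h + a *\<^sub>R k) - g (x + a *\<^sub>R k) - g (x + a *\<^sub>R h) + g x = \<phi> a - \<phi> 0"
    unfolding \<phi>_def by simp
  also have "\<dots> = a * (\<psi> a - \<psi> 0)" using \<tau>(3) unfolding \<psi>_def by (simp add: algebra_simps)
  also have "\<dots> = a * a * ghk (x + \<sigma> *\<^sub>R h + \<tau> *\<^sub>R k)" using \<sigma>(3) by (simp add: algebra_simps)
  finally show ?thesis using \<sigma> \<tau> by blast
qed

lemma clairaut_real:
  fixes g gh gk ghk gkh :: "'a::real_normed_vector \<Rightarrow> real"
  assumes W: "open W" "x \<in> W"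
    and dh: "\<And>y. y\<in>W \<Longrightarrow> ((\<lambda>s. g (y + s *\<^sub>R h)) has_real_derivative gh y) (at 0)"
    and dk: "\<And>y. y\<in>W \<Longrightarrow> ((\<lambda>s. g (y + s *\<^sub>R k)) has_real_derivative gk y) (at 0)"
    and dkh: "\<And>y. y\<in>W \<Longrightarrow> ((\<lambda>s. gk (y + s *\<^sub>R h)) has_real_derivative ghk y) (at 0)"
    and dhk: "\<And>y. y\<in>W \<Longrightarrow> ((\<lambda>s. gh (y + s *\<^sub>R k)) has_real_derivative gkh y) (at 0)"
    and c1: "continuous_on W ghk" and c2: "continuous_on W gkh"
  shows "ghk x = gkh x"
proof (rule ccontr)
  assume ne: "ghk x \<noteq> gkh x"
  define \<epsilon> where "\<epsilon> = \<bar>ghk x - gkh x\<bar> / 2"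
  have e: "\<epsilon> > 0" using ne by (simp add: \<epsilon>_def)
  obtain d1 where d1: "d1 > 0" "\<And>y. y \<in> W \<Longrightarrow> dist y x < d1 \<Longrightarrow> dist (ghk y) (ghk x) < \<epsilon>"
  proof -
    have "\<forall>x\<in>W. \<forall>e>0. \<exists>d>0. \<forall>x'\<in>W. dist x' x < d \<longrightarrow> dist (ghk x') (ghk x) < e"
      using c1 by (simp add: continuous_on_iff)
    then have "\<exists>d>0. \<forall>x'\<in>W. dist x' x < d \<longrightarrow> dist (ghk x') (ghk x) < \<epsilon>" using W(2) e by blast
    then show ?thesis using that by blast
  qed
  obtain d2 where d2: "d2 > 0" "\<And>y. y \<in> W \<Longrightarrow> dist y x < d2 \<Longrightarrow> dist (gkh y) (gkh x) < \<epsilon>"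
  proof -
    have "\<forall>x\<in>W. \<forall>e>0. \<exists>d>0. \<forall>x'\<in>W. dist x' x < d \<longrightarrow> dist (gkh x') (gkh x) < e"
      using c2 by (simp add: continuous_on_iff)
    then have "\<exists>d>0. \<forall>x'\<in>W. dist x' x < d \<longrightarrow> dist (gkh x') (gkh x) < \<epsilon>" using W(2) e by blast
    then show ?thesis using that by blast
  qed
  obtain d0 where d0: "d0 > 0" "ball x d0 \<subseteq> W" using W openE by blast
  define d where "d = min d0 (min d1 d2)"
  have d: "d > 0" using d0 d1 d2 by (simp add: d_def)
  define a where "a = d / (2 * (norm h + norm k + 1))"
  have pos: "2 * (norm h + norm k + 1) > 0" by (smt (verit) norm_ge_zero)
  have a: "a > 0" unfolding a_def using d pos by (rule divide_pos_pos)
  have small: "dist (x + \<sigma> *\<^sub>R h + \<tau> *\<^sub>R k) x < d" if "0 \<le> \<sigma>" "\<sigma> \<le> a" "0 \<le> \<tau>" "\<tau> \<le> a" for \<sigma> \<tau>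
  proof -
    have "dist (x + \<sigma> *\<^sub>R h + \<tau> *\<^sub>R k) x = norm (\<sigma> *\<^sub>R h + \<tau> *\<^sub>R k)" by (simp add: dist_norm)
    also have "\<dots> \<le> \<sigma> * norm h + \<tau> * norm k"
      using norm_triangle_ineq[of "\<sigma> *\<^sub>R h" "\<tau> *\<^sub>R k"] that by simp
    also have "\<dots> \<le> a * norm h + a * norm k"
      using that by (intro add_mono mult_right_mono) auto
    also have "\<dots> < d"
    proof -
      have "a * norm h + a * norm k = d * (norm h + norm k) / (2 * (norm h + norm k + 1))"
        by (simp add: a_def algebra_simps add_divide_distrib)
      also have "\<dots> < d"
        using d pos by (simp add: divide_less_eq)
      finally show ?thesis .
    qed
    finally show ?thesis .
  qed
  have inW: "x + \<sigma> *\<^sub>R h + \<tau> *\<^sub>R k \<in> W" if "0 \<le> \<sigma>" "\<sigma> \<le> a" "0 \<le> \<tau>" "\<tau> \<le> a" for \<sigma> \<tau>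
    using small[OF that] d0(2) by (auto simp: d_def dist_commute)
  obtain \<sigma>1 \<tau>1 where s1: "0 < \<sigma>1" "\<sigma>1 < a" "0 < \<tau>1" "\<tau>1 < a"
    "g (x + a *\<^sub>R h + a *\<^sub>R k) - g (x + a *\<^sub>R k) - g (x + a *\<^sub>R h) + g x = a * a * ghk (x + \<sigma>1 *\<^sub>R h + \<tau>1 *\<^sub>R k)"
    using mvt2d[of W g k gk h ghk a x, OF dk dkh a inW] by blast
  have inW': "x + \<sigma> *\<^sub>R k + \<tau> *\<^sub>R h \<in> W" if "0 \<le> \<sigma>" "\<sigma> \<le> a" "0 \<le> \<tau>" "\<tau> \<le> a" for \<sigma> \<tau>
  proof -
    have "x + \<tau> *\<^sub>R h + \<sigma> *\<^sub>R k \<in> W" using that by (intro inW) auto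
    then show ?thesis by (simp add: add_ac)
  qed
  obtain \<sigma>2 \<tau>2 where s2: "0 < \<sigma>2" "\<sigma>2 < a" "0 < \<tau>2" "\<tau>2 < a"
    "g (x + a *\<^sub>R k + a *\<^sub>R h) - g (x + a *\<^sub>R h) - g (x + a *\<^sub>R k) + g x = a * a * gkh (x + \<sigma>2 *\<^sub>R k + \<tau>2 *\<^sub>R h)"
    using mvt2d[of W g h gh k gkh a x, OF dh dhk a inW'] by blast
  have sw: "x + a *\<^sub>R k + a *\<^sub>R h = x + a *\<^sub>R h + a *\<^sub>R k" "x + \<sigma>2 *\<^sub>R k + \<tau>2 *\<^sub>R h = x + \<tau>2 *\<^sub>R h + \<sigma>2 *\<^sub>R k"
    by (simp_all add: add_ac)
  have "a * a * ghk (x + \<sigma>1 *\<^sub>R h + \<tau>1 *\<^sub>R k) = a * a * gkh (x + \<tau>2 *\<^sub>R h + \<sigma>2 *\<^sub>R k)"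
    using s1(5) s2(5) unfolding sw by linarith
  then have eq: "ghk (x + \<sigma>1 *\<^sub>R h + \<tau>1 *\<^sub>R k) = gkh (x + \<tau>2 *\<^sub>R h + \<sigma>2 *\<^sub>R k)"
    using a by simp
  have dd: "d \<le> d1" "d \<le> d2" unfolding d_def by simp_all
  have m1: "x + \<sigma>1 *\<^sub>R h + \<tau>1 *\<^sub>R k \<in> W" "dist (x + \<sigma>1 *\<^sub>R h + \<tau>1 *\<^sub>R k) x < d"
    using s1(1-4) by (intro inW small; simp)+
  have m2: "x + \<tau>2 *\<^sub>R h + \<sigma>2 *\<^sub>R k \<in> W" "dist (x + \<tau>2 *\<^sub>R h + \<sigma>2 *\<^sub>R k) x < d"
    using s2(1-4) by (intro inW small; simp)+
  have y1: "dist (ghk (x + \<sigma>1 *\<^sub>R h + \<tau>1 *\<^sub>R k)) (ghk x) < \<epsilon>"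
    using m1 dd by (intro d1(2)) auto
  have y2: "dist (gkh (x + \<tau>2 *\<^sub>R h + \<sigma>2 *\<^sub>R k)) (gkh x) < \<epsilon>"
    using m2 dd by (intro d2(2)) auto
  have "\<bar>ghk x - gkh x\<bar> < 2 * \<epsilon>" using y1 y2 eq unfolding dist_real_def by (smt (verit))
  then show False by (simp add: \<epsilon>_def)
qed



lemma L1:
  assumes "smooth_on S f" "y \<in> S"
  shows "((\<lambda>s. dirs hs f (y + s *\<^sub>R h)) has_vector_derivative dirs (h#hs) f y) (at 0)"
proof -
  have "(\<lambda>s. dirs hs f (y + s *\<^sub>R h)) differentiable (at 0)"
    using assms unfolding smooth_on_def by blast
  then show ?thesis by (simp add: dd_def vector_derivative_works[symmetric])
qed

lemma L1c:
  fixes f :: "'a::real_normed_vector \<Rightarrow> real^'n"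
  assumes "smooth_on S f" "y \<in> S"
  shows "((\<lambda>s. dirs hs f (y + s *\<^sub>R h) $ i) has_real_derivative dirs (h#hs) f y $ i) (at 0)"
  using hvd_nth_real[OF L1[OF assms]] .

lemma Lcont:
  fixes f :: "'a::real_normed_vector \<Rightarrow> real^'n"
  assumes "smooth_on S f"
  shows "continuous_on S (\<lambda>y. dirs hs f y $ i)"
proof -
  have "continuous_on S (dirs hs f)" using assms unfolding smooth_on_def by blast
  then show ?thesis by (intro continuous_intros)
qed

lemma clairaut_smooth:
  fixes f :: "'a::real_normed_vector \<Rightarrow> real^'n"
  assumes "smooth_on W f" "x \<in> W"
  shows "dirs [h, k] f x = dirs [k, h] f x"
proof -
  have W: "open W" using assms unfolding smooth_on_def by blast
  have "dirs [h, k] f x $ i = dirs [k, h] f x $ i" for i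
  proof (rule clairaut_real[OF W assms(2)])
    show "((\<lambda>s. f (y + s *\<^sub>R h) $ i) has_real_derivative dirs [h] f y $ i) (at 0)" if "y \<in> W" for y
      using L1c[OF assms(1) that, of "[]" h i] by simp
    show "((\<lambda>s. f (y + s *\<^sub>R k) $ i) has_real_derivative dirs [k] f y $ i) (at 0)" if "y \<in> W" for y
      using L1c[OF assms(1) that, of "[]" k i] by simp
    show "((\<lambda>s. dirs [k] f (y + s *\<^sub>R h) $ i) has_real_derivative dirs [h, k] f y $ i) (at 0)" if "y \<in> W" for y
      using L1c[OF assms(1) that, of "[k]" h i] by simp
    show "((\<lambda>s. dirs [h] f (y + s *\<^sub>R k) $ i) has_real_derivative dirs [k, h] f y $ i) (at 0)" if "y \<in> W" for y
      using L1c[OF assms(1) that, of "[h]" k i] by simp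
    show "continuous_on W (\<lambda>y. dirs [h, k] f y $ i)" by (rule Lcont[OF assms(1)])
    show "continuous_on W (\<lambda>y. dirs [k, h] f y $ i)" by (rule Lcont[OF assms(1)])
  qed
  then show ?thesis by (simp add: vec_eq_iff)
qed

lemma open_line:
  fixes P v :: "'a::real_normed_vector"
  assumes "open W"
  shows "open {r::real. P + r *\<^sub>R v \<in> W}"
proof -
  have "open ((\<lambda>r. P + r *\<^sub>R v) -` W)"
    by (rule continuous_open_vimage[OF assms]) (intro continuous_intros)
  then show ?thesis by (simp add: vimage_def)
qed

context
  fixes u :: "real^3 \<Rightarrow> real \<Rightarrow> real^3" and W
  assumes sm: "smooth_on W (\<lambda>(X, t). u X t)"
begin

abbreviation "ff \<equiv> (\<lambda>(X, t). u X t)"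

lemma Wopen: "open W" using sm unfolding smooth_on_def by blast

lemma E1:
  assumes "(X, t) \<in> W"
  shows "vel u X t = dirs [(0, 1)] ff (X, t)"
proof -
  have "((\<lambda>s. ff ((X, t) + s *\<^sub>R (0, 1))) has_vector_derivative dirs [(0, 1)] ff (X, t)) (at 0)"
    using L1[OF sm assms, of "[]" "(0,1)"] by simp
  then have "((\<lambda>s. u X (t + s)) has_vector_derivative dirs [(0, 1)] ff (X, t)) (at 0)"
    by simp
  then have "(u X has_vector_derivative dirs [(0, 1)] ff (X, t)) (at t)"
    by (rule hvd_shift0)
  then show ?thesis unfolding vel_def tder_def by (simp add: vector_derivative_at)
qed

lemma E2:
  assumes "(X, t) \<in> W"
  shows "(vel u X has_vector_derivative dirs [(0, 1), (0, 1)] ff (X, t)) (at t)"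
proof -
  have "((\<lambda>s. dirs [(0, 1)] ff ((X, t) + s *\<^sub>R (0, 1))) has_vector_derivative dirs [(0, 1), (0, 1)] ff (X, t)) (at 0)"
    using L1[OF sm assms, of "[(0,1)]" "(0,1)"] by simp
  then have "((\<lambda>s. dirs [(0, 1)] ff (X, t + s)) has_vector_derivative dirs [(0, 1), (0, 1)] ff (X, t)) (at 0)"
    by simp
  then have d: "((\<lambda>s. dirs [(0, 1)] ff (X, s)) has_vector_derivative dirs [(0, 1), (0, 1)] ff (X, t)) (at t)"
    by (rule hvd_shift0)
  have o: "open {r::real. (X, 0) + r *\<^sub>R (0, 1) \<in> W}" by (rule open_line[OF Wopen])
  show ?thesis
  proof (rule has_vector_derivative_transform_within_open[OF d o])
    show "t \<in> {r. (X, 0) + r *\<^sub>R (0, 1) \<in> W}" using assms by simp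
    show "dirs [(0, 1)] ff (X, y) = vel u X y" if "y \<in> {r. (X, 0) + r *\<^sub>R (0, 1) \<in> W}" for y
      using that E1[of X y] by simp
  qed
qed

lemma E3: "Grad (\<lambda>Y. u Y s) X = (\<chi> i j. dirs [(axis j 1, 0)] ff (X, s) $ i)"
  unfolding Grad_def pd_def by (simp add: dd_def)

lemma E3': "defgrad u X s = mat 1 + (\<chi> i j. dirs [(axis j 1, 0)] ff (X, s) $ i)"
  unfolding defgrad_def E3 ..

lemma E4:
  assumes "(X, t) \<in> W"
  shows "(defgrad u X has_vector_derivative (\<chi> i j. dirs [(0, 1), (axis j 1, 0)] ff (X, t) $ i)) (at t)"
proof -
  have c: "((\<lambda>s. dirs [(axis j 1, 0)] ff (X, s) $ i) has_real_derivative dirs [(0, 1), (axis j 1, 0)] ff (X, t) $ i) (at t)" for i j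
  proof -
    have "((\<lambda>s. dirs [(axis j 1, 0)] ff ((X, t) + s *\<^sub>R (0, 1)) $ i) has_real_derivative dirs [(0, 1), (axis j 1, 0)] ff (X, t) $ i) (at 0)"
      by (rule L1c[OF sm assms])
    then have "((\<lambda>s. dirs [(axis j 1, 0)] ff (X, s + t) $ i) has_real_derivative dirs [(0, 1), (axis j 1, 0)] ff (X, t) $ i) (at 0)"
      by (simp add: add.commute)
    then show ?thesis using DERIV_shift[of "\<lambda>s. dirs [(axis j 1, 0)] ff (X, s) $ i" _ 0 t] by simp
  qed
  have "((\<lambda>s. \<chi> i j. dirs [(axis j 1, 0)] ff (X, s) $ i) has_vector_derivative (\<chi> i j. dirs [(0, 1), (axis j 1, 0)] ff (X, t) $ i)) (at t)"
    by (rule hvd_mat_lambda[OF c])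
  then have "((\<lambda>s. mat 1 + (\<chi> i j. dirs [(axis j 1, 0)] ff (X, s) $ i)) has_vector_derivative 0 + (\<chi> i j. dirs [(0, 1), (axis j 1, 0)] ff (X, t) $ i)) (at t)"
    by (intro has_vector_derivative_add has_vector_derivative_const)
  then show ?thesis unfolding E3'[abs_def] by simp
qed

lemma E5:
  assumes "(X, t) \<in> W"
  shows "Grad (\<lambda>Y. vel u Y t) X = (\<chi> i j. dirs [(axis j 1, 0), (0, 1)] ff (X, t) $ i)"
proof -
  have "pd (\<lambda>Y. vel u Y t) X j = dirs [(axis j 1, 0), (0, 1)] ff (X, t)" for j
  proof -
    have d: "((\<lambda>r. dirs [(0, 1)] ff ((X, t) + r *\<^sub>R (axis j 1, 0))) has_vector_derivative dirs [(axis j 1, 0), (0, 1)] ff (X, t)) (at 0)"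
      by (rule L1[OF sm assms])
    have o: "open {r::real. (X, t) + r *\<^sub>R (axis j 1, 0) \<in> W}" by (rule open_line[OF Wopen])
    show ?thesis unfolding pd_def dd_def
    proof (rule vd_congr[OF d o])
      show "0 \<in> {r. (X, t) + r *\<^sub>R (axis j 1, 0) \<in> W}" using assms by simp
      show "dirs [(0, 1)] ff ((X, t) + y *\<^sub>R (axis j 1, 0)) = vel u (X + y *\<^sub>R axis j 1) t"
        if "y \<in> {r. (X, t) + r *\<^sub>R (axis j 1, 0) \<in> W}" for y
        using that E1[of "X + y *\<^sub>R axis j 1" t] by simp
    qed
  qed
  then show ?thesis unfolding Grad_def by simp
qed

lemma Fdot:
  assumes "(X, t) \<in> W"
  shows "(defgrad u X has_vector_derivative Grad (\<lambda>Y. vel u Y t) X) (at t)"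
  using E4[OF assms] unfolding E5[OF assms] clairaut_smooth[OF sm assms] .

end


lemma hvd_nth2:
  fixes A :: "real \<Rightarrow> real^'n^'m"
  assumes "(A has_vector_derivative A') (at x)"
  shows "((\<lambda>s. A s $ i $ j) has_real_derivative A' $ i $ j) (at x)"
  by (rule hvd_nth_real[OF hvd_nth[OF assms]])

lemma hvd_scale:
  "(f has_vector_derivative f') F \<Longrightarrow> ((\<lambda>x. c *\<^sub>R f x) has_vector_derivative c *\<^sub>R f') F"
  by (rule bounded_linear.has_vector_derivative[OF bounded_linear_scaleR_right])

lemma hvd_mmult:
  fixes A :: "real \<Rightarrow> real^'n^'m" and B :: "real \<Rightarrow> real^'k^'n"
  assumes a: "(A has_vector_derivative A') (at x)" and b: "(B has_vector_derivative B') (at x)"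
  shows "((\<lambda>s. A s ** B s) has_vector_derivative (A' ** B x + A x ** B')) (at x)"
proof -
  have "((\<lambda>s. \<chi> i j. \<Sum>k\<in>UNIV. A s $ i $ k * B s $ k $ j) has_vector_derivative
        (\<chi> i j. \<Sum>k\<in>UNIV. A' $ i $ k * B x $ k $ j + B' $ k $ j * A x $ i $ k)) (at x)"
    by (intro hvd_mat_lambda DERIV_sum DERIV_mult hvd_nth2 a b)
  moreover have "(\<chi> i j. \<Sum>k\<in>UNIV. A' $ i $ k * B x $ k $ j + B' $ k $ j * A x $ i $ k) = A' ** B x + A x ** B'"
    by (simp add: vec_eq_iff matrix_matrix_mult_def sum.distrib mult.commute)
  ultimately show ?thesis by (simp add: matrix_matrix_mult_def)
qed

lemma hvd_transpose:
  fixes A :: "real \<Rightarrow> real^'n^'m"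
  assumes a: "(A has_vector_derivative A') (at x)"
  shows "((\<lambda>s. transpose (A s)) has_vector_derivative transpose A') (at x)"
proof -
  have "((\<lambda>s. \<chi> i j. A s $ j $ i) has_vector_derivative (\<chi> i j. A' $ j $ i)) (at x)"
    by (intro hvd_mat_lambda hvd_nth2 a)
  then show ?thesis by (simp add: transpose_def)
qed

lemma green_deriv:
  fixes F :: "real \<Rightarrow> real^'n^'n"
  assumes "(F has_vector_derivative F') (at t)"
  shows "((\<lambda>s. (1/2) *\<^sub>R (transpose (F s) ** F s - mat 1)) has_vector_derivative
           (1/2) *\<^sub>R (transpose (F t) ** F' + transpose F' ** F t)) (at t)"
proof -
  have "((\<lambda>s. transpose (F s) ** F s) has_vector_derivative (transpose F' ** F t + transpose (F t) ** F')) (at t)"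
    by (intro hvd_mmult hvd_transpose assms)
  then have "((\<lambda>s. transpose (F s) ** F s - mat 1) has_vector_derivative (transpose F' ** F t + transpose (F t) ** F') - 0) (at t)"
    by (intro has_vector_derivative_diff has_vector_derivative_const)
  then have "((\<lambda>s. (1/2) *\<^sub>R (transpose (F s) ** F s - mat 1)) has_vector_derivative
           (1/2) *\<^sub>R ((transpose F' ** F t + transpose (F t) ** F') - 0)) (at t)"
    by (rule hvd_scale)
  then show ?thesis by (simp add: add.commute)
qed

lemma cont_transpose[continuous_intros]:
  fixes A :: "'x::topological_space \<Rightarrow> real^'n^'m"
  shows "continuous_on S A \<Longrightarrow> continuous_on S (\<lambda>x. transpose (A x))"
  unfolding transpose_def by (intro continuous_intros)

lemma cont_mmult[continuous_intros]:
  fixes A :: "'x::topological_space \<Rightarrow> real^'n^'m" and B :: "'x \<Rightarrow> real^'k^'n"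
  shows "continuous_on S A \<Longrightarrow> continuous_on S B \<Longrightarrow> continuous_on S (\<lambda>x. A x ** B x)"
  unfolding matrix_matrix_mult_def by (intro continuous_intros)

lemma cont_trace[continuous_intros]:
  fixes A :: "'x::topological_space \<Rightarrow> real^'n^'n"
  shows "continuous_on S A \<Longrightarrow> continuous_on S (\<lambda>x. trace (A x))"
  unfolding trace_def by (intro continuous_intros)

lemma cont_ddot[continuous_intros]:
  fixes A :: "'x::topological_space \<Rightarrow> ten3"
  shows "continuous_on S A \<Longrightarrow> continuous_on S B \<Longrightarrow> continuous_on S (\<lambda>x. ddot (A x) (B x))"
  unfolding ddot_def by (intro continuous_intros)

lemma cont_elast[continuous_intros]:
  fixes A :: "'x::topological_space \<Rightarrow> ten3"
  shows "continuous_on S A \<Longrightarrow> continuous_on S (\<lambda>x. elast mu lam (A x))"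
  unfolding elast_def by (intro continuous_intros)

lemma ddot_commute: "ddot A B = ddot B A"
  unfolding ddot_def by (simp add: mult.commute)

lemma ddot_add_left: "ddot (A + B) C = ddot A C + ddot B C"
  unfolding ddot_def by (simp add: distrib_right sum.distrib)

lemma ddot_add_right: "ddot A (B + C) = ddot A B + ddot A C"
  unfolding ddot_def by (simp add: distrib_left sum.distrib)

lemma ddot_scale_left: "ddot (c *\<^sub>R A) C = c * ddot A C"
  unfolding ddot_def by (simp add: sum_distrib_left mult.assoc)

lemma ddot_scale_right: "ddot A (c *\<^sub>R C) = c * ddot A C"
  unfolding ddot_def by (simp add: sum_distrib_left algebra_simps)

lemma elast_add: "elast mu lam (A + B) = elast mu lam A + elast mu lam B"
  unfolding elast_def by (simp add: vec_eq_iff transpose_def trace_def sum.distrib algebra_simps mat_def)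

lemma elast_scale: "elast mu lam (c *\<^sub>R A) = c *\<^sub>R elast mu lam A"
  unfolding elast_def by (simp add: vec_eq_iff transpose_def trace_def sum_distrib_left algebra_simps mat_def)

lemma ddot_elast_sym: "ddot A (elast mu lam B) = ddot B (elast mu lam A)"
  unfolding ddot_def elast_def
  by (simp add: transpose_def trace_def mat_def sum_3 algebra_simps)



lemma INTB:
  fixes f :: "'a::euclidean_space \<Rightarrow> real"
  assumes "open \<Omega>" "bounded \<Omega>" "continuous_on \<Omega> f" "\<And>x. x \<in> \<Omega> \<Longrightarrow> \<bar>f x\<bar> \<le> M"
  shows "f integrable_on \<Omega>"
proof -
  have lm: "\<Omega> \<in> lmeasurable" by (rule lmeasurable_open[OF assms(2,1)])
  then have sl: "\<Omega> \<in> sets lebesgue" by (simp add: fmeasurableD)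
  show ?thesis
  proof (rule measurable_bounded_by_integrable_imp_integrable_real[of f \<Omega> "\<lambda>x. M"])
    show "f \<in> borel_measurable (lebesgue_on \<Omega>)"
      by (rule continuous_imp_measurable_on_sets_lebesgue[OF assms(3) sl])
    show "(\<lambda>x. M) integrable_on \<Omega>" by (rule integrable_on_const[OF lm])
  qed (use assms sl in auto)
qed

lemma INTC:
  fixes f :: "'a::euclidean_space \<Rightarrow> real"
  assumes "open \<Omega>" "bounded \<Omega>" "continuous_on (closure \<Omega>) f"
  shows "f integrable_on \<Omega>"
proof -
  have "compact (f ` closure \<Omega>)"
    using assms by (intro compact_continuous_image) auto
  then obtain M where M: "\<And>y. y \<in> f ` closure \<Omega> \<Longrightarrow> \<bar>y\<bar> \<le> M"
    using compact_imp_bounded bounded_real by metis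
  show ?thesis
  proof (rule INTB[OF assms(1,2)])
    show "continuous_on \<Omega> f" using assms(3) closure_subset continuous_on_subset by blast
    show "\<bar>f x\<bar> \<le> M" if "x \<in> \<Omega>" for x using M[of "f x"] that closure_subset by blast
  qed
qed

lemma INTK:
  fixes f :: "'a::euclidean_space \<Rightarrow> real"
  assumes "open \<Omega>" "bounded \<Omega>" "continuous_on \<Omega> f" "compact K" "K \<subseteq> \<Omega>"
    "\<And>x. x \<in> \<Omega> \<Longrightarrow> x \<notin> K \<Longrightarrow> f x = 0"
  shows "f integrable_on \<Omega>"
proof -
  have "compact (f ` K)"
    using assms continuous_on_subset by (intro compact_continuous_image) blast+
  then obtain M where M: "\<And>y. y \<in> f ` K \<Longrightarrow> \<bar>y\<bar> \<le> M"
    using compact_imp_bounded bounded_real by metis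
  show ?thesis
  proof (rule INTB[OF assms(1,2,3), of "max M 0"])
    show "\<bar>f x\<bar> \<le> max M 0" if "x \<in> \<Omega>" for x
      using M[of "f x"] assms(6)[OF that] by (cases "x \<in> K") force+
  qed
qed

lemma patch_cont:
  fixes h :: "'a::euclidean_space \<Rightarrow> real"
  assumes "open \<Omega>" "compact K" "K \<subseteq> \<Omega>" "continuous_on \<Omega> h" "\<And>x. x \<in> \<Omega> \<Longrightarrow> x \<notin> K \<Longrightarrow> h x = 0"
  shows "continuous_on UNIV (\<lambda>x. if x \<in> \<Omega> then h x else 0)"
proof -
  have "continuous_on (\<Omega> \<union> (- K)) (\<lambda>x. if x \<in> \<Omega> then h x else 0)"
  proof (rule continuous_on_open_Un)
    show "open \<Omega>" by fact
    show "open (- K)" using assms(2) by (simp add: compact_imp_closed open_Compl)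
    show "continuous_on \<Omega> (\<lambda>x. if x \<in> \<Omega> then h x else 0)"
      using assms(4) by (rule continuous_on_eq) auto
    show "continuous_on (- K) (\<lambda>x. if x \<in> \<Omega> then h x else 0)"
      by (rule continuous_on_eq[OF continuous_on_const[of _ 0]]) (use assms(5) in auto)
  qed
  moreover have "\<Omega> \<union> (- K) = UNIV" using assms(3) by auto
  ultimately show ?thesis by simp
qed

lemma div0_core:
  fixes G DG :: "'a::euclidean_space \<Rightarrow> real" and e :: 'a
  assumes K: "compact K"
    and Gc: "continuous_on UNIV G" and DGc: "continuous_on UNIV DG"
    and G0: "\<And>x. x \<notin> K \<Longrightarrow> G x = 0" and DG0: "\<And>x. x \<notin> K \<Longrightarrow> DG x = 0"
    and der: "\<And>x. ((\<lambda>s. G (x + s *\<^sub>R e)) has_real_derivative DG x) (at 0)"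
  shows "integral UNIV DG = 0"
proof -
  define K' where "K' = (\<lambda>p. fst p - snd p *\<^sub>R e) ` (K \<times> {-1..1::real})"
  have "compact K'" unfolding K'_def
    by (intro compact_continuous_image compact_Times K compact_Icc continuous_intros)
  then obtain c where c: "K' \<subseteq> cbox (-c) c"
    using bounded_subset_cbox_symmetric compact_imp_bounded by metis
  define B where "B = cbox (-c) c"
  have KB: "x - s *\<^sub>R e \<in> B" if "x \<in> K" "\<bar>s\<bar> \<le> 1" for x s
  proof -
    have "x - s *\<^sub>R e \<in> K'" unfolding K'_def using that by (intro image_eqI[of _ _ "(x, s)"]) auto
    then show ?thesis using c B_def by auto
  qed
  have out: "G (x + s *\<^sub>R e) = 0" if "x \<notin> B" "\<bar>s\<bar> \<le> 1" for x s
  proof (rule G0, rule notI)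
    assume "x + s *\<^sub>R e \<in> K"
    then have "(x + s *\<^sub>R e) - s *\<^sub>R e \<in> B" using KB that(2) by blast
    then show False using that(1) by simp
  qed
  have outD: "DG x = 0" if "x \<notin> B" for x
  proof (rule DG0, rule notI)
    assume "x \<in> K"
    then have "x - 0 *\<^sub>R e \<in> B" using KB[of x 0] by simp
    then show False using that by simp
  qed
  have Gcs: "continuous_on B (\<lambda>x. G (x + s *\<^sub>R e))" for s
    by (intro continuous_on_compose2[OF Gc] continuous_intros) auto
  define J where "J = integral B G"
  have GJ: "(G has_integral J) B" unfolding J_def B_def
    using Gcs[of 0] by (intro integrable_integral integrable_continuous) (simp add: B_def)
  have const: "integral B (\<lambda>x. G (x + s *\<^sub>R e)) = J" if "\<bar>s\<bar> \<le> 1" for s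
  proof -
    have "((\<lambda>x. G (1 *\<^sub>R x + s *\<^sub>R e)) has_integral (J /\<^sub>R 1 ^ DIM('a)))
           (cbox ((-c - s *\<^sub>R e) /\<^sub>R 1) ((c - s *\<^sub>R e) /\<^sub>R 1))"
      using GJ unfolding B_def by (intro has_integral_affinity') auto
    then have h1: "((\<lambda>x. G (x + s *\<^sub>R e)) has_integral J) (cbox (-s *\<^sub>R e + -c) (-s *\<^sub>R e + c))"
      by (simp add: algebra_simps)
    have h2: "((\<lambda>x. G (x + s *\<^sub>R e)) has_integral J) UNIV"
    proof (rule has_integral_on_superset[OF h1])
      show "G (x + s *\<^sub>R e) = 0" if "x \<notin> cbox (-s *\<^sub>R e + -c) (-s *\<^sub>R e + c)" for x
      proof (rule G0, rule notI)
        assume xK: "x + s *\<^sub>R e \<in> K"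
        have "x + s *\<^sub>R e \<in> B" using KB[OF xK, of 0] by simp
        then have "-s *\<^sub>R e + (x + s *\<^sub>R e) \<in> (\<lambda>x. -s *\<^sub>R e + x) ` cbox (-c) c" unfolding B_def by blast
        then have "x \<in> cbox (-s *\<^sub>R e + -c) (-s *\<^sub>R e + c)" unfolding cbox_translation by simp
        then show False using that by blast
      qed
    qed auto
    have "(\<lambda>x. if x \<in> B then G (x + s *\<^sub>R e) else 0) = (\<lambda>x. G (x + s *\<^sub>R e))"
      using out that by auto
    then have "((\<lambda>x. G (x + s *\<^sub>R e)) has_integral J) B"
      using h2 has_integral_restrict_UNIV[of B "\<lambda>x. G (x + s *\<^sub>R e)" J] by simp
    then show ?thesis by (rule integral_unique)
  qed
  define U where "U = {-1<..<1::real}"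
  have "((\<lambda>s. integral (cbox (-c) c) (\<lambda>x. G (x + s *\<^sub>R e))) has_field_derivative
          integral (cbox (-c) c) (\<lambda>x. DG (x + 0 *\<^sub>R e))) (at 0 within U)"
  proof (rule leibniz_rule_field_derivative[where fx = "\<lambda>s x. DG (x + s *\<^sub>R e)"])
    show "((\<lambda>s. G (x + s *\<^sub>R e)) has_field_derivative DG (x + s0 *\<^sub>R e)) (at s0 within U)" for x s0
    proof -
      have "((\<lambda>s. G (x + s *\<^sub>R e)) has_real_derivative DG (x + s0 *\<^sub>R e)) (at s0)"
        by (rule deriv_line[OF der])
      then show ?thesis by (rule has_field_derivative_at_within)
    qed
    show "(\<lambda>x. G (x + s *\<^sub>R e)) integrable_on cbox (-c) c" for s
      using Gcs[of s] unfolding B_def by (rule integrable_continuous)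
    have "continuous_on UNIV (\<lambda>p. DG (snd p + fst p *\<^sub>R e))"
      by (intro continuous_on_compose2[OF DGc] continuous_intros) auto
    then show "continuous_on (U \<times> cbox (-c) c) (\<lambda>(s, x). DG (x + s *\<^sub>R e))"
      by (rule continuous_on_subset[of UNIV, THEN continuous_on_eq]) (auto simp: case_prod_beta)
    show "0 \<in> U" "convex U" by (auto simp: U_def)
  qed
  then have d1: "((\<lambda>s. integral B (\<lambda>x. G (x + s *\<^sub>R e))) has_field_derivative integral B DG) (at 0)"
    by (simp add: B_def U_def at_within_open[of 0 "{-1<..<1::real}"])
  have d2: "((\<lambda>s. integral B (\<lambda>x. G (x + s *\<^sub>R e))) has_field_derivative 0) (at 0)"
  proof (rule has_field_derivative_transform_within_open[OF DERIV_const[of J "at (0::real)"]])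
    show "open U" "0 \<in> U" by (auto simp: U_def)
    show "J = integral B (\<lambda>x. G (x + s *\<^sub>R e))" if "s \<in> U" for s
      using const[of s] that by (auto simp: U_def)
  qed
  have IB: "integral B DG = 0" using DERIV_unique[OF d1 d2] .
  have DGB: "(DG has_integral integral B DG) B"
    unfolding B_def by (intro integrable_integral integrable_continuous continuous_on_subset[OF DGc]) auto
  have "(DG has_integral integral B DG) UNIV"
    by (rule has_integral_on_superset[OF DGB]) (use outD in auto)
  then show ?thesis using IB by (simp add: integral_unique)
qed

lemma div0:
  fixes g Dg :: "'a::euclidean_space \<Rightarrow> real" and e :: 'a
  assumes O: "open \<Omega>" and K: "compact K" "K \<subseteq> \<Omega>"
    and gc: "continuous_on \<Omega> g" and Dgc: "continuous_on \<Omega> Dg"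
    and g0: "\<And>x. x \<in> \<Omega> \<Longrightarrow> x \<notin> K \<Longrightarrow> g x = 0" and Dg0: "\<And>x. x \<in> \<Omega> \<Longrightarrow> x \<notin> K \<Longrightarrow> Dg x = 0"
    and der: "\<And>x. x \<in> \<Omega> \<Longrightarrow> ((\<lambda>s. g (x + s *\<^sub>R e)) has_real_derivative Dg x) (at 0)"
  shows "integral \<Omega> Dg = 0"
proof -
  define G where "G x = (if x \<in> \<Omega> then g x else 0)" for x
  define DG where "DG x = (if x \<in> \<Omega> then Dg x else 0)" for x
  have "integral UNIV DG = 0"
  proof (rule div0_core[OF K(1)])
    show "continuous_on UNIV G" unfolding G_def by (rule patch_cont[OF O K gc g0])
    show "continuous_on UNIV DG" unfolding DG_def by (rule patch_cont[OF O K Dgc Dg0])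
    show "G x = 0" if "x \<notin> K" for x using that g0 by (auto simp: G_def)
    show "DG x = 0" if "x \<notin> K" for x using that Dg0 by (auto simp: DG_def)
    show "((\<lambda>s. G (x + s *\<^sub>R e)) has_real_derivative DG x) (at 0)" for x
    proof (cases "x \<in> \<Omega>")
      case True
      have "((\<lambda>s. G (x + s *\<^sub>R e)) has_real_derivative Dg x) (at 0)"
      proof (rule has_field_derivative_transform_within_open[OF der[OF True]])
        show "open {s::real. x + s *\<^sub>R e \<in> \<Omega>}" by (rule open_line[OF O])
        show "0 \<in> {s::real. x + s *\<^sub>R e \<in> \<Omega>}" using True by simp
        show "g (x + s *\<^sub>R e) = G (x + s *\<^sub>R e)" if "s \<in> {s::real. x + s *\<^sub>R e \<in> \<Omega>}" for s
          using that by (simp add: G_def)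
      qed
      then show ?thesis by (simp add: DG_def True)
    next
      case False
      then have xK: "x \<notin> K" using K by auto
      have "((\<lambda>s. G (x + s *\<^sub>R e)) has_real_derivative 0) (at 0)"
      proof (rule has_field_derivative_transform_within_open[OF DERIV_const[of "0::real" "at (0::real)"]])
        show "open {s::real. x + s *\<^sub>R e \<in> - K}"
          using K(1) by (intro open_line) (simp add: compact_imp_closed open_Compl)
        show "0 \<in> {s::real. x + s *\<^sub>R e \<in> - K}" using xK by simp
        show "0 = G (x + s *\<^sub>R e)" if "s \<in> {s::real. x + s *\<^sub>R e \<in> - K}" for s
          using that g0 by (auto simp: G_def)
      qed
      then show ?thesis using False by (simp add: DG_def)
    qed
  qed
  moreover have "integral UNIV DG = integral \<Omega> Dg"
    unfolding DG_def by (rule integral_restrict_UNIV)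
  ultimately show ?thesis by simp
qed



lemma GT1:
  fixes D :: "3 \<Rightarrow> vec3" and z2 F :: "ten3"
  shows "ddot z2 (transpose F ** (\<chi> i j. D j $ i)) = (\<Sum>j\<in>UNIV. \<Sum>i\<in>UNIV. D j $ i * (F ** z2) $ i $ j)"
proof -
  have "ddot z2 (transpose F ** (\<chi> i j. D j $ i)) = (\<Sum>a\<in>UNIV. \<Sum>b\<in>UNIV. \<Sum>k\<in>UNIV. z2 $ a $ b * F $ k $ a * D b $ k)"
    unfolding ddot_def matrix_matrix_mult_def transpose_def by (simp add: sum_distrib_left mult.assoc)
  also have "\<dots> = (\<Sum>b\<in>UNIV. \<Sum>a\<in>UNIV. \<Sum>k\<in>UNIV. z2 $ a $ b * F $ k $ a * D b $ k)"
    by (rule sum.swap)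
  also have "\<dots> = (\<Sum>b\<in>UNIV. \<Sum>k\<in>UNIV. \<Sum>a\<in>UNIV. z2 $ a $ b * F $ k $ a * D b $ k)"
    by (rule sum.cong[OF refl], rule sum.swap)
  also have "\<dots> = (\<Sum>j\<in>UNIV. \<Sum>i\<in>UNIV. D j $ i * (F ** z2) $ i $ j)"
    unfolding matrix_matrix_mult_def by (simp add: sum_distrib_left mult.commute mult.left_commute)
  finally show ?thesis .
qed

lemma GT2:
  fixes G z2 F :: "ten3"
  assumes "transpose z2 = z2"
  shows "ddot z2 (transpose G ** F) = ddot z2 (transpose F ** G)"
proof -
  have s: "z2 $ i $ j = z2 $ j $ i" for i j
  proof -
    have "transpose z2 $ i $ j = z2 $ i $ j" using assms by simp
    then show ?thesis by (simp add: transpose_def)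
  qed
  have "ddot z2 (transpose G ** F) = (\<Sum>a\<in>UNIV. \<Sum>b\<in>UNIV. z2 $ a $ b * (\<Sum>k\<in>UNIV. G $ k $ a * F $ k $ b))"
    unfolding ddot_def matrix_matrix_mult_def transpose_def by simp
  also have "\<dots> = (\<Sum>b\<in>UNIV. \<Sum>a\<in>UNIV. z2 $ a $ b * (\<Sum>k\<in>UNIV. G $ k $ a * F $ k $ b))"
    by (rule sum.swap)
  also have "\<dots> = (\<Sum>b\<in>UNIV. \<Sum>a\<in>UNIV. z2 $ b $ a * (\<Sum>k\<in>UNIV. F $ k $ b * G $ k $ a))"
  proof (intro sum.cong refl)
    fix b a :: 3
    show "z2 $ a $ b * (\<Sum>k\<in>UNIV. G $ k $ a * F $ k $ b) = z2 $ b $ a * (\<Sum>k\<in>UNIV. F $ k $ b * G $ k $ a)"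
      using s[of a b] by (simp add: mult.commute)
  qed
  also have "\<dots> = ddot z2 (transpose F ** G)"
    unfolding ddot_def matrix_matrix_mult_def transpose_def by simp
  finally show ?thesis .
qed

lemma P2:
  fixes D :: "3 \<Rightarrow> vec3" and z2 F :: "ten3"
  assumes "transpose z2 = z2"
  shows "(\<Sum>j\<in>UNIV. \<Sum>i\<in>UNIV. D j $ i * (F ** z2) $ i $ j) =
    ddot z2 ((1/2) *\<^sub>R (transpose F ** (\<chi> i j. D j $ i) + transpose (\<chi> i j. D j $ i) ** F))"
proof -
  have "ddot z2 ((1/2) *\<^sub>R (transpose F ** (\<chi> i j. D j $ i) + transpose (\<chi> i j. D j $ i) ** F))
     = (1/2) * (ddot z2 (transpose F ** (\<chi> i j. D j $ i)) + ddot z2 (transpose (\<chi> i j. D j $ i) ** F))"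
    unfolding ddot_def by (simp add: sum_distrib_left distrib_left distrib_right sum.distrib mult.assoc)
  also have "\<dots> = ddot z2 (transpose F ** (\<chi> i j. D j $ i))" using GT2[OF assms] by simp
  finally show ?thesis using GT1 by simp
qed

lemma P1:
  fixes w1 :: "real^'n" and X :: "'n \<Rightarrow> real^'n^'n"
  shows "(\<Sum>j\<in>UNIV. \<Sum>i\<in>UNIV. X j $ i $ j * w1 $ i) = w1 \<bullet> (\<chi> i. \<Sum>j\<in>UNIV. X j $ i $ j)"
proof -
  have "(\<Sum>j\<in>UNIV. \<Sum>i\<in>UNIV. X j $ i $ j * w1 $ i) = (\<Sum>i\<in>UNIV. \<Sum>j\<in>UNIV. X j $ i $ j * w1 $ i)"
    by (rule sum.swap)
  also have "\<dots> = (\<Sum>i\<in>UNIV. w1 $ i * (\<Sum>j\<in>UNIV. X j $ i $ j))"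
    by (simp add: sum_distrib_left mult.commute)
  finally show ?thesis by (simp add: inner_vec_def)
qed

lemma P3:
  fixes D :: "3 \<Rightarrow> vec3" and z3 :: "ten3"
  shows "(\<Sum>j\<in>UNIV. \<Sum>i\<in>UNIV. D j $ i * z3 $ i $ j) = ddot z3 (\<chi> i j. D j $ i)"
proof -
  have "(\<Sum>j\<in>UNIV. \<Sum>i\<in>UNIV. D j $ i * z3 $ i $ j) = (\<Sum>i\<in>UNIV. \<Sum>j\<in>UNIV. D j $ i * z3 $ i $ j)"
    by (rule sum.swap)
  then show ?thesis unfolding ddot_def by (simp add: mult.commute)
qed

lemma PB:
  fixes w1 :: vec3 and dF Dz2 Dz3 :: "3 \<Rightarrow> ten3" and F z2 :: ten3
  shows "(\<Sum>j\<in>UNIV. \<Sum>i\<in>UNIV. ((dF j ** z2 + F ** Dz2 j) $ i $ j + Dz3 j $ i $ j) * w1 $ i)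
     = w1 \<bullet> ((\<chi> i. \<Sum>j\<in>UNIV. (dF j ** z2 + F ** Dz2 j) $ i $ j) + (\<chi> i. \<Sum>j\<in>UNIV. Dz3 j $ i $ j))"
proof -
  have "(\<Sum>j\<in>UNIV. \<Sum>i\<in>UNIV. ((dF j ** z2 + F ** Dz2 j) $ i $ j + Dz3 j $ i $ j) * w1 $ i)
      = (\<Sum>j\<in>UNIV. \<Sum>i\<in>UNIV. (dF j ** z2 + F ** Dz2 j + Dz3 j) $ i $ j * w1 $ i)"
    by simp
  also have "\<dots> = w1 \<bullet> (\<chi> i. \<Sum>j\<in>UNIV. (dF j ** z2 + F ** Dz2 j + Dz3 j) $ i $ j)"
    by (rule P1)
  also have "(\<chi> i. \<Sum>j\<in>UNIV. (dF j ** z2 + F ** Dz2 j + Dz3 j) $ i $ j)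
     = (\<chi> i. \<Sum>j\<in>UNIV. (dF j ** z2 + F ** Dz2 j) $ i $ j) + (\<chi> i. \<Sum>j\<in>UNIV. Dz3 j $ i $ j)"
    by (simp add: vec_eq_iff sum.distrib)
  finally show ?thesis .
qed

lemma PA:
  fixes Dw1 :: "3 \<Rightarrow> vec3" and F z2 z3 :: ten3
  assumes "transpose z2 = z2"
  shows "(\<Sum>j\<in>UNIV. \<Sum>i\<in>UNIV. Dw1 j $ i * ((F ** z2) $ i $ j + z3 $ i $ j))
    = ddot z2 ((1/2) *\<^sub>R (transpose F ** (\<chi> i j. Dw1 j $ i) + transpose (\<chi> i j. Dw1 j $ i) ** F)) + ddot z3 (\<chi> i j. Dw1 j $ i)"
proof -
  have "(\<Sum>j\<in>UNIV. \<Sum>i\<in>UNIV. Dw1 j $ i * ((F ** z2) $ i $ j + z3 $ i $ j))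
     = (\<Sum>j\<in>UNIV. \<Sum>i\<in>UNIV. Dw1 j $ i * (F ** z2) $ i $ j) + (\<Sum>j\<in>UNIV. \<Sum>i\<in>UNIV. Dw1 j $ i * z3 $ i $ j)"
    by (simp only: distrib_left sum.distrib)
  then show ?thesis using P2[OF assms, of Dw1 F] P3[of Dw1 z3] by simp
qed

lemma skew_alg:
  fixes w1 z1 :: vec3 and w2 z2 w3 z3 F :: ten3 and Dw1 Dz1 :: "3 \<Rightarrow> vec3"
    and Dw2 Dz2 Dw3 Dz3 dF :: "3 \<Rightarrow> ten3"
  assumes sw: "transpose w2 = w2" and sz: "transpose z2 = z2"
  shows "(\<Sum>j\<in>UNIV. \<Sum>i\<in>UNIV. Dw1 j $ i * ((F ** z2) $ i $ j + z3 $ i $ j) + ((dF j ** z2 + F ** Dz2 j) $ i $ j + Dz3 j $ i $ j) * w1 $ i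
        + (Dz1 j $ i * ((F ** w2) $ i $ j + w3 $ i $ j) + ((dF j ** w2 + F ** Dw2 j) $ i $ j + Dw3 j $ i $ j) * z1 $ i))
   = (w1 \<bullet> ((\<chi> i. \<Sum>j\<in>UNIV. (dF j ** z2 + F ** Dz2 j) $ i $ j) + (\<chi> i. \<Sum>j\<in>UNIV. Dz3 j $ i $ j))
        + ddot w2 ((1/2) *\<^sub>R (transpose F ** (\<chi> i j. Dz1 j $ i) + transpose (\<chi> i j. Dz1 j $ i) ** F)) + ddot w3 (\<chi> i j. Dz1 j $ i))
   + (z1 \<bullet> ((\<chi> i. \<Sum>j\<in>UNIV. (dF j ** w2 + F ** Dw2 j) $ i $ j) + (\<chi> i. \<Sum>j\<in>UNIV. Dw3 j $ i $ j))
        + ddot z2 ((1/2) *\<^sub>R (transpose F ** (\<chi> i j. Dw1 j $ i) + transpose (\<chi> i j. Dw1 j $ i) ** F)) + ddot z3 (\<chi> i j. Dw1 j $ i))"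
proof -
  have e: "(\<Sum>j\<in>UNIV. \<Sum>i\<in>UNIV. Dw1 j $ i * ((F ** z2) $ i $ j + z3 $ i $ j) + ((dF j ** z2 + F ** Dz2 j) $ i $ j + Dz3 j $ i $ j) * w1 $ i
        + (Dz1 j $ i * ((F ** w2) $ i $ j + w3 $ i $ j) + ((dF j ** w2 + F ** Dw2 j) $ i $ j + Dw3 j $ i $ j) * z1 $ i))
     = (\<Sum>j\<in>UNIV. \<Sum>i\<in>UNIV. Dw1 j $ i * ((F ** z2) $ i $ j + z3 $ i $ j))
     + (\<Sum>j\<in>UNIV. \<Sum>i\<in>UNIV. ((dF j ** z2 + F ** Dz2 j) $ i $ j + Dz3 j $ i $ j) * w1 $ i)
     + ((\<Sum>j\<in>UNIV. \<Sum>i\<in>UNIV. Dz1 j $ i * ((F ** w2) $ i $ j + w3 $ i $ j))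
     + (\<Sum>j\<in>UNIV. \<Sum>i\<in>UNIV. ((dF j ** w2 + F ** Dw2 j) $ i $ j + Dw3 j $ i $ j) * z1 $ i))"
    by (simp only: sum.distrib)
  show ?thesis unfolding e PA[OF sz] PA[OF sw] PB by simp
qed



definition dFd :: "(vec3 \<Rightarrow> real \<Rightarrow> vec3) \<Rightarrow> real \<Rightarrow> 3 \<Rightarrow> vec3 \<Rightarrow> ten3" where
  "dFd u t j Y = (\<chi> a b. dirs [(axis j 1, 0), (axis b 1, 0)] (\<lambda>(X, t). u X t) (Y, t) $ a)"

definition gsum :: "(vec3\<Rightarrow>vec3) \<Rightarrow> (vec3\<Rightarrow>ten3) \<Rightarrow> (vec3\<Rightarrow>ten3) \<Rightarrow> (vec3\<Rightarrow>vec3) \<Rightarrow> (vec3\<Rightarrow>ten3) \<Rightarrow> (vec3\<Rightarrow>ten3)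
   \<Rightarrow> (vec3\<Rightarrow>ten3) \<Rightarrow> 3 \<Rightarrow> vec3 \<Rightarrow> real" where
  "gsum w1 w2 w3 z1 z2 z3 FF j Y = (\<Sum>i\<in>UNIV. w1 Y $ i * ((FF Y ** z2 Y) $ i $ j + z3 Y $ i $ j)
      + z1 Y $ i * ((FF Y ** w2 Y) $ i $ j + w3 Y $ i $ j))"

definition Dgsum :: "(vec3\<Rightarrow>vec3) \<Rightarrow> (vec3\<Rightarrow>ten3) \<Rightarrow> (vec3\<Rightarrow>ten3) \<Rightarrow> (vec3\<Rightarrow>vec3) \<Rightarrow> (vec3\<Rightarrow>ten3) \<Rightarrow> (vec3\<Rightarrow>ten3)
   \<Rightarrow> (vec3\<Rightarrow>ten3) \<Rightarrow> (3 \<Rightarrow> vec3 \<Rightarrow> ten3) \<Rightarrow> 3 \<Rightarrow> vec3 \<Rightarrow> real" where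
  "Dgsum w1 w2 w3 z1 z2 z3 FF dF j Y = (\<Sum>i\<in>UNIV.
      dirs [axis j 1] w1 Y $ i * ((FF Y ** z2 Y) $ i $ j + z3 Y $ i $ j)
      + ((dF j Y ** z2 Y + FF Y ** dirs [axis j 1] z2 Y) $ i $ j + dirs [axis j 1] z3 Y $ i $ j) * w1 Y $ i
      + (dirs [axis j 1] z1 Y $ i * ((FF Y ** w2 Y) $ i $ j + w3 Y $ i $ j)
      + ((dF j Y ** w2 Y + FF Y ** dirs [axis j 1] w2 Y) $ i $ j + dirs [axis j 1] w3 Y $ i $ j) * z1 Y $ i))"

definition I1e :: "(vec3\<Rightarrow>vec3) \<Rightarrow> (vec3\<Rightarrow>ten3) \<Rightarrow> (vec3\<Rightarrow>ten3) \<Rightarrow> (vec3\<Rightarrow>vec3) \<Rightarrow> (vec3\<Rightarrow>ten3) \<Rightarrow> (vec3\<Rightarrow>ten3)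
   \<Rightarrow> (vec3\<Rightarrow>ten3) \<Rightarrow> (3 \<Rightarrow> vec3 \<Rightarrow> ten3) \<Rightarrow> vec3 \<Rightarrow> real" where
  "I1e w1 w2 w3 z1 z2 z3 FF dF Y =
     w1 Y \<bullet> ((\<chi> i. \<Sum>j\<in>UNIV. (dF j Y ** z2 Y + FF Y ** dirs [axis j 1] z2 Y) $ i $ j) + (\<chi> i. \<Sum>j\<in>UNIV. dirs [axis j 1] z3 Y $ i $ j))
     + ddot (w2 Y) ((1/2) *\<^sub>R (transpose (FF Y) ** (\<chi> i j. dirs [axis j 1] z1 Y $ i) + transpose (\<chi> i j. dirs [axis j 1] z1 Y $ i) ** FF Y))
     + ddot (w3 Y) (\<chi> i j. dirs [axis j 1] z1 Y $ i)"

lemma sum_Dgsum: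
  assumes "transpose (w2 Y) = w2 Y" "transpose (z2 Y) = z2 Y"
  shows "(\<Sum>j\<in>UNIV. Dgsum w1 w2 w3 z1 z2 z3 FF dF j Y) = I1e w1 w2 w3 z1 z2 z3 FF dF Y + I1e z1 z2 z3 w1 w2 w3 FF dF Y"
  unfolding Dgsum_def I1e_def
  by (rule skew_alg[where ?Dw1.0="\<lambda>j. dirs [axis j 1] w1 Y" and F="FF Y" and ?z3.0="z3 Y"
        and ?Dz2.0="\<lambda>j. dirs [axis j 1] z2 Y" and ?Dz3.0="\<lambda>j. dirs [axis j 1] z3 Y" and ?w1.0="w1 Y"
        and ?Dz1.0="\<lambda>j. dirs [axis j 1] z1 Y" and ?w3.0="w3 Y" and ?Dw2.0="\<lambda>j. dirs [axis j 1] w2 Y"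
        and ?Dw3.0="\<lambda>j. dirs [axis j 1] w3 Y" and ?z1.0="z1 Y" and dF="\<lambda>j. dF j Y", OF assms(1,2)])

lemma T1:
  assumes "smooth_on UNIV \<phi>"
  shows "((\<lambda>r. \<phi> (Y + r *\<^sub>R v)) has_vector_derivative dirs [v] \<phi> Y) (at 0)"
  using L1[OF assms UNIV_I, of "[]" Y v] by simp

lemma T2:
  assumes "smooth_on UNIV \<phi>"
  shows "continuous_on S (dirs hs \<phi>)"
proof -
  have "continuous_on UNIV (dirs hs \<phi>)" using assms unfolding smooth_on_def by blast
  then show ?thesis using continuous_on_subset subset_UNIV by blast
qed

lemma T2':
  assumes "smooth_on UNIV \<phi>"
  shows "continuous_on S \<phi>"
  using T2[OF assms, of S "[]"] by simp

lemma T0: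
  assumes "x \<notin> csupp \<phi>" shows "\<phi> x = 0"
proof (rule ccontr)
  assume "\<phi> x \<noteq> 0"
  then have "x \<in> {x. \<phi> x \<noteq> 0}" by simp
  then have "x \<in> csupp \<phi>" unfolding csupp_def by (rule subsetD[OF closure_subset])
  then show False using assms by simp
qed

lemma T3:
  assumes "smooth_on UNIV \<phi>" "Y \<notin> csupp \<phi>"
  shows "dirs [v] \<phi> Y = 0"
proof -
  have "vector_derivative (\<lambda>s. \<phi> (Y + s *\<^sub>R v)) (at 0) = 0"
  proof (rule vd_congr[OF has_vector_derivative_const])
    show "open {s::real. Y + s *\<^sub>R v \<in> - csupp \<phi>}"
      by (rule open_line) (simp add: csupp_def open_Compl)
    show "0 \<in> {s::real. Y + s *\<^sub>R v \<in> - csupp \<phi>}" using assms(2) by simp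
    show "0 = \<phi> (Y + s *\<^sub>R v)" if "s \<in> {s::real. Y + s *\<^sub>R v \<in> - csupp \<phi>}" for s
      using that T0[of "Y + s *\<^sub>R v" \<phi>] by simp
  qed
  then show ?thesis by (simp add: dd_def)
qed

lemma pd_dirs: "pd \<phi> Y j = dirs [axis j 1] \<phi> Y"
  by (simp add: pd_def)

lemma Grad_dirs: "Grad \<phi> Y = (\<chi> i j. dirs [axis j 1] \<phi> Y $ i)"
  by (simp add: Grad_def pd_dirs)

lemma Div_dirs: "Div \<phi> Y = (\<chi> i. \<Sum>j\<in>UNIV. dirs [axis j 1] \<phi> Y $ i $ j)"
  by (simp add: Div_def pd_dirs)



context
  fixes u :: "real^3 \<Rightarrow> real \<Rightarrow> real^3" and W and \<Omega> :: "vec3 set" and t :: real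
  assumes sm: "smooth_on W (\<lambda>(X, t). u X t)" and O: "open \<Omega>" and bd: "bounded \<Omega>"
    and inW: "\<And>Y. Y \<in> \<Omega> \<Longrightarrow> (Y, t) \<in> W"
begin

lemma F1:
  assumes "Y \<in> \<Omega>"
  shows "((\<lambda>r. defgrad u (Y + r *\<^sub>R axis j 1) t) has_vector_derivative dFd u t j Y) (at 0)"
proof -
  have c: "((\<lambda>r. dirs [(axis k 1, 0)] (\<lambda>(X, t). u X t) (Y + r *\<^sub>R axis j 1, t) $ i) has_real_derivative
      dirs [(axis j 1, 0), (axis k 1, 0)] (\<lambda>(X, t). u X t) (Y, t) $ i) (at 0)" for i k
    using L1c[OF sm inW[OF assms], of "[(axis k 1, 0)]" "(axis j 1, 0)" i] by simp
  have "((\<lambda>r. \<chi> i k. dirs [(axis k 1, 0)] (\<lambda>(X, t). u X t) (Y + r *\<^sub>R axis j 1, t) $ i) has_vector_derivative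
      dFd u t j Y) (at 0)"
    unfolding dFd_def by (rule hvd_mat_lambda[OF c])
  then have "((\<lambda>r. mat 1 + (\<chi> i k. dirs [(axis k 1, 0)] (\<lambda>(X, t). u X t) (Y + r *\<^sub>R axis j 1, t) $ i)) has_vector_derivative
      0 + dFd u t j Y) (at 0)"
    by (intro has_vector_derivative_add has_vector_derivative_const)
  then show ?thesis unfolding E3'[OF sm] by simp
qed

lemma F2: "continuous_on \<Omega> (\<lambda>Y. dirs hs (\<lambda>(X, t). u X t) (Y, t) $ i)"
proof -
  have "continuous_on \<Omega> (\<lambda>Y. (\<lambda>y. dirs hs (\<lambda>(X, t). u X t) y $ i) (Y, t))"
    by (rule continuous_on_compose2[OF Lcont[OF sm]]) (auto intro!: continuous_intros inW)
  then show ?thesis by simp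
qed

lemma cFF: "continuous_on \<Omega> (\<lambda>Y. defgrad u Y t)"
  unfolding E3'[OF sm] by (intro continuous_intros F2)

lemma cdF: "continuous_on \<Omega> (\<lambda>Y. dFd u t j Y)"
  unfolding dFd_def by (intro continuous_intros F2)

lemma DivF:
  assumes "Y \<in> \<Omega>" "smooth_on UNIV z2"
  shows "Div (\<lambda>Z. defgrad u Z t ** z2 Z) Y = (\<chi> i. \<Sum>j\<in>UNIV. (dFd u t j Y ** z2 Y + defgrad u Y t ** dirs [axis j 1] z2 Y) $ i $ j)"
proof -
  have "pd (\<lambda>Z. defgrad u Z t ** z2 Z) Y j = dFd u t j Y ** z2 Y + defgrad u Y t ** dirs [axis j 1] z2 Y" for j
  proof -
    have "((\<lambda>r. defgrad u (Y + r *\<^sub>R axis j 1) t ** z2 (Y + r *\<^sub>R axis j 1)) has_vector_derivative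
       dFd u t j Y ** z2 (Y + 0 *\<^sub>R axis j 1) + defgrad u (Y + 0 *\<^sub>R axis j 1) t ** dirs [axis j 1] z2 Y) (at 0)"
      by (rule hvd_mmult[OF F1[OF assms(1)] T1[OF assms(2)]])
    then show ?thesis unfolding pd_def dd_def by (simp add: vector_derivative_at)
  qed
  then show ?thesis by (simp add: Div_def)
qed


lemma gder:
  assumes Y: "Y \<in> \<Omega>"
    and s1: "smooth_on UNIV w1" "smooth_on UNIV w2" "smooth_on UNIV w3"
    and s2: "smooth_on UNIV z1" "smooth_on UNIV z2" "smooth_on UNIV z3"
  shows "((\<lambda>r. gsum w1 w2 w3 z1 z2 z3 (\<lambda>Y. defgrad u Y t) j (Y + r *\<^sub>R axis j 1)) has_real_derivative
           Dgsum w1 w2 w3 z1 z2 z3 (\<lambda>Y. defgrad u Y t) (dFd u t) j Y) (at 0)"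
proof -
  have dv: "((\<lambda>r. \<phi> (Y + r *\<^sub>R axis j 1) $ i) has_real_derivative dirs [axis j 1] \<phi> Y $ i) (at 0)"
    if "smooth_on UNIV \<phi>" for \<phi> :: "vec3 \<Rightarrow> vec3" and i :: 3
    by (rule hvd_nth_real[OF T1[OF that]])
  have dm: "((\<lambda>r. \<phi> (Y + r *\<^sub>R axis j 1) $ i $ k) has_real_derivative dirs [axis j 1] \<phi> Y $ i $ k) (at 0)"
    if "smooth_on UNIV \<phi>" for \<phi> :: "vec3 \<Rightarrow> ten3" and i k :: 3
    by (rule hvd_nth2[OF T1[OF that]])
  have dFm: "((\<lambda>r. (defgrad u (Y + r *\<^sub>R axis j 1) t ** \<phi> (Y + r *\<^sub>R axis j 1)) $ i $ k) has_real_derivative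
      (dFd u t j Y ** \<phi> Y + defgrad u Y t ** dirs [axis j 1] \<phi> Y) $ i $ k) (at 0)"
    if "smooth_on UNIV \<phi>" for \<phi> :: "vec3 \<Rightarrow> ten3" and i k :: 3
    using hvd_nth2[where i=i and j=k, OF hvd_mmult[OF F1[OF Y] T1[OF that]]] by simp
  show ?thesis
    unfolding gsum_def Dgsum_def
    apply (rule DERIV_cong)
     apply ((rule DERIV_sum DERIV_add DERIV_mult dFm dm dv s1 s2)+)
    apply simp
    done
qed

lemma I1_eq:
  assumes Y: "Y \<in> \<Omega>" and s: "smooth_on UNIV z2"
  shows "w1 Y \<bullet> (Div (\<lambda>Z. defgrad u Z t ** z2 Z) Y + Div z3 Y) + ddot (w2 Y) (aop (\<lambda>Y. defgrad u Y t) z1 Y)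
      + ddot (w3 Y) (Grad z1 Y) = I1e w1 w2 w3 z1 z2 z3 (\<lambda>Y. defgrad u Y t) (dFd u t) Y"
  unfolding DivF[OF Y s] unfolding Div_dirs aop_def Grad_dirs I1e_def ..

lemma c_gsum:
  assumes s1: "smooth_on UNIV w1" "smooth_on UNIV w2" "smooth_on UNIV w3"
    and s2: "smooth_on UNIV z1" "smooth_on UNIV z2" "smooth_on UNIV z3"
  shows "continuous_on \<Omega> (gsum w1 w2 w3 z1 z2 z3 (\<lambda>Y. defgrad u Y t) j)"
  unfolding gsum_def by (intro continuous_intros cFF T2'[OF s1(1)] T2'[OF s1(2)] T2'[OF s1(3)]
     T2'[OF s2(1)] T2'[OF s2(2)] T2'[OF s2(3)])

lemma c_Dgsum:
  assumes s1: "smooth_on UNIV w1" "smooth_on UNIV w2" "smooth_on UNIV w3"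
    and s2: "smooth_on UNIV z1" "smooth_on UNIV z2" "smooth_on UNIV z3"
  shows "continuous_on \<Omega> (Dgsum w1 w2 w3 z1 z2 z3 (\<lambda>Y. defgrad u Y t) (dFd u t) j)"
  unfolding Dgsum_def by (intro continuous_intros cFF cdF T2'[OF s1(1)] T2'[OF s1(2)] T2'[OF s1(3)]
     T2'[OF s2(1)] T2'[OF s2(2)] T2'[OF s2(3)] T2[OF s1(1)] T2[OF s1(2)] T2[OF s1(3)]
     T2[OF s2(1)] T2[OF s2(2)] T2[OF s2(3)])

lemma c_I1e:
  assumes s1: "smooth_on UNIV w1" "smooth_on UNIV w2" "smooth_on UNIV w3"
    and s2: "smooth_on UNIV z1" "smooth_on UNIV z2" "smooth_on UNIV z3"
  shows "continuous_on \<Omega> (I1e w1 w2 w3 z1 z2 z3 (\<lambda>Y. defgrad u Y t) (dFd u t))"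
  unfolding I1e_def by (intro continuous_intros cFF cdF T2'[OF s1(1)] T2'[OF s1(2)] T2'[OF s1(3)]
     T2'[OF s2(1)] T2'[OF s2(2)] T2'[OF s2(3)] T2[OF s1(1)] T2[OF s1(2)] T2[OF s1(3)]
     T2[OF s2(1)] T2[OF s2(2)] T2[OF s2(3)])

lemma z_gsum:
  assumes "Y \<notin> csupp w1" "Y \<notin> csupp z1"
  shows "gsum w1 w2 w3 z1 z2 z3 FF j Y = 0"
  unfolding gsum_def using T0[OF assms(1)] T0[OF assms(2)] by simp

lemma z_Dgsum:
  assumes "smooth_on UNIV w1" "smooth_on UNIV z1" "Y \<notin> csupp w1" "Y \<notin> csupp z1"
  shows "Dgsum w1 w2 w3 z1 z2 z3 FF dF j Y = 0"
  unfolding Dgsum_def using T0[OF assms(3)] T0[OF assms(4)] T3[OF assms(1,3)] T3[OF assms(2,4)] by simp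

lemma z_I1e:
  assumes "Y \<notin> csupp w1" "Y \<notin> csupp w2" "Y \<notin> csupp w3"
  shows "I1e w1 w2 w3 z1 z2 z3 FF dF Y = 0"
  unfolding I1e_def using T0[OF assms(1)] T0[OF assms(2)] T0[OF assms(3)] by (simp add: ddot_def)


lemma skew:
  assumes w: "test_triple \<Omega> w" and z: "test_triple \<Omega> z"
  shows "pairing \<Omega> w (Jop (\<lambda>Y. defgrad u Y t) z) = - pairing \<Omega> (Jop (\<lambda>Y. defgrad u Y t) w) z"
proof -
  obtain w1 w2 w3 where wd: "w = (w1, w2, w3)" by (cases w) auto
  obtain z1 z2 z3 where zd: "z = (z1, z2, z3)" by (cases z) auto
  have tw: "test_field \<Omega> w1" "test_sym \<Omega> w2" "test_field \<Omega> w3" using w unfolding wd test_triple_def by auto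
  have tz: "test_field \<Omega> z1" "test_sym \<Omega> z2" "test_field \<Omega> z3" using z unfolding zd test_triple_def by auto
  have sw: "smooth_on UNIV w1" "smooth_on UNIV w2" "smooth_on UNIV w3"
    using tw unfolding test_sym_def test_field_def by auto
  have sz: "smooth_on UNIV z1" "smooth_on UNIV z2" "smooth_on UNIV z3"
    using tz unfolding test_sym_def test_field_def by auto
  have cw: "compact (csupp w1)" "compact (csupp w2)" "compact (csupp w3)"
    "csupp w1 \<subseteq> \<Omega>" "csupp w2 \<subseteq> \<Omega>" "csupp w3 \<subseteq> \<Omega>"
    using tw unfolding test_sym_def test_field_def by auto
  have cz: "compact (csupp z1)" "compact (csupp z2)" "compact (csupp z3)"
    "csupp z1 \<subseteq> \<Omega>" "csupp z2 \<subseteq> \<Omega>" "csupp z3 \<subseteq> \<Omega>"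
    using tz unfolding test_sym_def test_field_def by auto
  have symw: "\<And>X. transpose (w2 X) = w2 X" using tw unfolding test_sym_def by auto
  have symz: "\<And>X. transpose (z2 X) = z2 X" using tz unfolding test_sym_def by auto
  define A where "A = I1e w1 w2 w3 z1 z2 z3 (\<lambda>Y. defgrad u Y t) (dFd u t)"
  define B where "B = I1e z1 z2 z3 w1 w2 w3 (\<lambda>Y. defgrad u Y t) (dFd u t)"
  have p1: "pairing \<Omega> w (Jop (\<lambda>Y. defgrad u Y t) z) = integral \<Omega> A"
  proof -
    have "pairing \<Omega> w (Jop (\<lambda>Y. defgrad u Y t) z) = integral \<Omega> (\<lambda>Y. w1 Y \<bullet> (Div (\<lambda>Z. defgrad u Z t ** z2 Z) Y + Div z3 Y)
       + ddot (w2 Y) (aop (\<lambda>Y. defgrad u Y t) z1 Y) + ddot (w3 Y) (Grad z1 Y))"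
      unfolding wd zd pairing_def Jop_def by simp
    also have "\<dots> = integral \<Omega> A"
      unfolding A_def by (rule integral_cong) (rule I1_eq[OF _ sz(2)])
    finally show ?thesis .
  qed
  have p2: "pairing \<Omega> (Jop (\<lambda>Y. defgrad u Y t) w) z = integral \<Omega> B"
  proof -
    have "pairing \<Omega> (Jop (\<lambda>Y. defgrad u Y t) w) z = integral \<Omega> (\<lambda>Y. (Div (\<lambda>Z. defgrad u Z t ** w2 Z) Y + Div w3 Y) \<bullet> z1 Y
       + ddot (aop (\<lambda>Y. defgrad u Y t) w1 Y) (z2 Y) + ddot (Grad w1 Y) (z3 Y))"
      unfolding wd zd pairing_def Jop_def by simp
    also have "\<dots> = integral \<Omega> B"
    proof (rule integral_cong)
      fix Y assume Y: "Y \<in> \<Omega>"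
      have "(Div (\<lambda>Z. defgrad u Z t ** w2 Z) Y + Div w3 Y) \<bullet> z1 Y
       + ddot (aop (\<lambda>Y. defgrad u Y t) w1 Y) (z2 Y) + ddot (Grad w1 Y) (z3 Y)
       = z1 Y \<bullet> (Div (\<lambda>Z. defgrad u Z t ** w2 Z) Y + Div w3 Y)
       + ddot (z2 Y) (aop (\<lambda>Y. defgrad u Y t) w1 Y) + ddot (z3 Y) (Grad w1 Y)"
        by (simp only: inner_commute[of "Div (\<lambda>Z. defgrad u Z t ** w2 Z) Y + Div w3 Y" "z1 Y"]
             ddot_commute[of "aop (\<lambda>Y. defgrad u Y t) w1 Y" "z2 Y"] ddot_commute[of "Grad w1 Y" "z3 Y"])
      also have "\<dots> = B Y" unfolding B_def by (rule I1_eq[OF Y sw(2)])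
      finally show "(Div (\<lambda>Z. defgrad u Z t ** w2 Z) Y + Div w3 Y) \<bullet> z1 Y
       + ddot (aop (\<lambda>Y. defgrad u Y t) w1 Y) (z2 Y) + ddot (Grad w1 Y) (z3 Y) = B Y" .
    qed
    finally show ?thesis .
  qed
  have iA: "A integrable_on \<Omega>"
  proof (rule INTK[OF O bd _ _ _, of _ "csupp w1 \<union> csupp w2 \<union> csupp w3"])
    show "continuous_on \<Omega> A" unfolding A_def by (rule c_I1e[OF sw sz])
    show "compact (csupp w1 \<union> csupp w2 \<union> csupp w3)" using cw by (intro compact_Un) auto
    show "csupp w1 \<union> csupp w2 \<union> csupp w3 \<subseteq> \<Omega>" using cw by auto
    show "A x = 0" if "x \<in> \<Omega>" "x \<notin> csupp w1 \<union> csupp w2 \<union> csupp w3" for x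
      unfolding A_def using that by (intro z_I1e) auto
  qed
  have iB: "B integrable_on \<Omega>"
  proof (rule INTK[OF O bd _ _ _, of _ "csupp z1 \<union> csupp z2 \<union> csupp z3"])
    show "continuous_on \<Omega> B" unfolding B_def by (rule c_I1e[OF sz sw])
    show "compact (csupp z1 \<union> csupp z2 \<union> csupp z3)" using cz by (intro compact_Un) auto
    show "csupp z1 \<union> csupp z2 \<union> csupp z3 \<subseteq> \<Omega>" using cz by auto
    show "B x = 0" if "x \<in> \<Omega>" "x \<notin> csupp z1 \<union> csupp z2 \<union> csupp z3" for x
      unfolding B_def using that by (intro z_I1e) auto
  qed
  define K where "K = csupp w1 \<union> csupp z1"
  have K: "compact K" "K \<subseteq> \<Omega>" unfolding K_def using cw cz by (auto intro: compact_Un)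
  have Dz: "Dgsum w1 w2 w3 z1 z2 z3 (\<lambda>Y. defgrad u Y t) (dFd u t) j x = 0" if "x \<notin> K" for j x
    using that unfolding K_def by (intro z_Dgsum sw(1) sz(1)) auto
  have gz: "gsum w1 w2 w3 z1 z2 z3 (\<lambda>Y. defgrad u Y t) j x = 0" if "x \<notin> K" for j x
    using that unfolding K_def by (intro z_gsum) auto
  have iD: "Dgsum w1 w2 w3 z1 z2 z3 (\<lambda>Y. defgrad u Y t) (dFd u t) j integrable_on \<Omega>" for j
    by (rule INTK[OF O bd c_Dgsum[OF sw sz] K]) (use Dz in auto)
  have D0: "integral \<Omega> (Dgsum w1 w2 w3 z1 z2 z3 (\<lambda>Y. defgrad u Y t) (dFd u t) j) = 0" for j
  proof (rule div0[OF O K c_gsum[OF sw sz] c_Dgsum[OF sw sz], where e="axis j 1"])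
    show "gsum w1 w2 w3 z1 z2 z3 (\<lambda>Y. defgrad u Y t) j x = 0" if "x \<in> \<Omega>" "x \<notin> K" for x
      using gz that by blast
    show "Dgsum w1 w2 w3 z1 z2 z3 (\<lambda>Y. defgrad u Y t) (dFd u t) j x = 0" if "x \<in> \<Omega>" "x \<notin> K" for x
      using Dz that by blast
    show "((\<lambda>s. gsum w1 w2 w3 z1 z2 z3 (\<lambda>Y. defgrad u Y t) j (x + s *\<^sub>R axis j 1)) has_real_derivative
       Dgsum w1 w2 w3 z1 z2 z3 (\<lambda>Y. defgrad u Y t) (dFd u t) j x) (at 0)" if "x \<in> \<Omega>" for x
      by (rule gder[OF that sw sz])
  qed
  have "integral \<Omega> A + integral \<Omega> B = integral \<Omega> (\<lambda>Y. A Y + B Y)"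
    using integral_add[OF iA iB] by simp
  also have "\<dots> = integral \<Omega> (\<lambda>Y. \<Sum>j\<in>UNIV. Dgsum w1 w2 w3 z1 z2 z3 (\<lambda>Y. defgrad u Y t) (dFd u t) j Y)"
    unfolding A_def B_def by (rule integral_cong) (simp add: sum_Dgsum[OF symw symz])
  also have "\<dots> = (\<Sum>j\<in>UNIV. integral \<Omega> (Dgsum w1 w2 w3 z1 z2 z3 (\<lambda>Y. defgrad u Y t) (dFd u t) j))"
    by (rule integral_sum) (auto intro: iD)
  also have "\<dots> = 0" using D0 by simp
  finally have "integral \<Omega> A = - integral \<Omega> B" by simp
  then show ?thesis using p1 p2 by simp
qed

end


lemma quad_deriv:
  "((\<lambda>\<epsilon>::real. (1/2) * (a + \<epsilon> * b + \<epsilon>^2 * c)) has_real_derivative (1/2) * b) (at 0)"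
  by (auto intro!: derivative_eq_intros)

lemma int_quad:
  fixes a f g :: "vec3 \<Rightarrow> real"
  assumes "a integrable_on \<Omega>" "f integrable_on \<Omega>" "g integrable_on \<Omega>"
  shows "integral \<Omega> (\<lambda>X. a X + c1 * f X + c2 * g X) = integral \<Omega> a + c1 * integral \<Omega> f + c2 * integral \<Omega> g"
proof -
  have i1: "(\<lambda>X. c1 * f X) integrable_on \<Omega>" by (rule integrable_on_mult_right[OF assms(2)])
  have i2: "(\<lambda>X. c2 * g X) integrable_on \<Omega>" by (rule integrable_on_mult_right[OF assms(3)])
  have "integral \<Omega> (\<lambda>X. a X + c1 * f X + c2 * g X) = integral \<Omega> (\<lambda>X. a X + c1 * f X) + integral \<Omega> (\<lambda>X. c2 * g X)"
    by (rule integral_add[OF integrable_add[OF assms(1) i1] i2])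
  also have "\<dots> = integral \<Omega> a + integral \<Omega> (\<lambda>X. c1 * f X) + integral \<Omega> (\<lambda>X. c2 * g X)"
    by (simp add: integral_add[OF assms(1) i1])
  finally show ?thesis by simp
qed

lemma vd_p_gen:
  fixes p v \<delta> :: "vec3 \<Rightarrow> vec3" and E F :: "vec3 \<Rightarrow> ten3"
  assumes rho: "rho0 \<noteq> 0" and pv: "\<And>X. p X = rho0 *\<^sub>R v X"
    and ia: "(\<lambda>X. (1/rho0) * (p X \<bullet> p X) + ddot (E X) (elast mu lam (E X))) integrable_on \<Omega>"
    and ib: "(\<lambda>X. p X \<bullet> \<delta> X) integrable_on \<Omega>" and ic: "(\<lambda>X. \<delta> X \<bullet> \<delta> X) integrable_on \<Omega>"
  shows "((\<lambda>\<epsilon>. Ham rho0 mu lam \<Omega> (\<lambda>X. p X + \<epsilon> *\<^sub>R \<delta> X) E F) has_real_derivative integral \<Omega> (\<lambda>X. v X \<bullet> \<delta> X)) (at 0)"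
proof -
  define a where "a X = (1/rho0) * (p X \<bullet> p X) + ddot (E X) (elast mu lam (E X))" for X
  have sq: "(x + \<epsilon> *\<^sub>R y) \<bullet> (x + \<epsilon> *\<^sub>R y) = x \<bullet> x + 2 * \<epsilon> * (x \<bullet> y) + \<epsilon>^2 * (y \<bullet> y)" for x y :: vec3 and \<epsilon>
    by (simp add: inner_add_left inner_add_right inner_commute[of y x] power2_eq_square algebra_simps)
  have eq: "Ham rho0 mu lam \<Omega> (\<lambda>X. p X + \<epsilon> *\<^sub>R \<delta> X) E F =
     (1/2) * (integral \<Omega> a + \<epsilon> * ((2/rho0) * integral \<Omega> (\<lambda>X. p X \<bullet> \<delta> X)) + \<epsilon>^2 * ((1/rho0) * integral \<Omega> (\<lambda>X. \<delta> X \<bullet> \<delta> X)))" for \<epsilon>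
  proof -
    have "(\<lambda>X. (1/rho0) * ((p X + \<epsilon> *\<^sub>R \<delta> X) \<bullet> (p X + \<epsilon> *\<^sub>R \<delta> X)) + ddot (E X) (elast mu lam (E X)))
       = (\<lambda>X. a X + (\<epsilon> * (2/rho0)) * (p X \<bullet> \<delta> X) + (\<epsilon>^2 * (1/rho0)) * (\<delta> X \<bullet> \<delta> X))"
      by (rule ext, subst sq) (simp add: a_def algebra_simps)
    then show ?thesis unfolding Ham_def
      using int_quad[of a \<Omega> "\<lambda>X. p X \<bullet> \<delta> X" "\<lambda>X. \<delta> X \<bullet> \<delta> X" "\<epsilon> * (2/rho0)" "\<epsilon>^2 * (1/rho0)"] ia ib ic
      by (simp add: a_def[abs_def] algebra_simps)
  qed
  have vi: "integral \<Omega> (\<lambda>X. v X \<bullet> \<delta> X) = (1/2) * ((2/rho0) * integral \<Omega> (\<lambda>X. p X \<bullet> \<delta> X))"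
  proof -
    have "(\<lambda>X. v X \<bullet> \<delta> X) = (\<lambda>X. (1/rho0) * (p X \<bullet> \<delta> X))" using rho by (simp add: pv)
    then show ?thesis by simp
  qed
  show ?thesis unfolding eq vi by (rule quad_deriv)
qed

lemma ddot_zero_left [simp]: "ddot 0 B = 0"
  by (simp add: ddot_def)

lemma vd_E_gen:
  fixes p :: "vec3 \<Rightarrow> vec3" and E F \<delta> :: "vec3 \<Rightarrow> ten3"
  assumes ia: "(\<lambda>X. (1/rho0) * (p X \<bullet> p X) + ddot (E X) (elast mu lam (E X))) integrable_on \<Omega>"
    and ib: "(\<lambda>X. ddot (\<delta> X) (elast mu lam (E X))) integrable_on \<Omega>"
    and ic: "(\<lambda>X. ddot (\<delta> X) (elast mu lam (\<delta> X))) integrable_on \<Omega>"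
  shows "((\<lambda>\<epsilon>. Ham rho0 mu lam \<Omega> p (\<lambda>X. E X + \<epsilon> *\<^sub>R \<delta> X) F) has_real_derivative
           integral \<Omega> (\<lambda>X. ddot (elast mu lam (E X)) (\<delta> X))) (at 0)"
proof -
  define a where "a X = (1/rho0) * (p X \<bullet> p X) + ddot (E X) (elast mu lam (E X))" for X
  have sq: "ddot (x + \<epsilon> *\<^sub>R y) (elast mu lam (x + \<epsilon> *\<^sub>R y)) =
      ddot x (elast mu lam x) + 2 * \<epsilon> * ddot y (elast mu lam x) + \<epsilon>^2 * ddot y (elast mu lam y)" for x y \<epsilon>
    using ddot_elast_sym[of x mu lam y]
    by (simp add: elast_add elast_scale ddot_add_left ddot_add_right ddot_scale_left ddot_scale_right
        power2_eq_square algebra_simps)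
  have eq: "Ham rho0 mu lam \<Omega> p (\<lambda>X. E X + \<epsilon> *\<^sub>R \<delta> X) F =
     (1/2) * (integral \<Omega> a + \<epsilon> * (2 * integral \<Omega> (\<lambda>X. ddot (\<delta> X) (elast mu lam (E X)))) + \<epsilon>^2 * integral \<Omega> (\<lambda>X. ddot (\<delta> X) (elast mu lam (\<delta> X))))" for \<epsilon>
  proof -
    have "(\<lambda>X. (1/rho0) * (p X \<bullet> p X) + ddot (E X + \<epsilon> *\<^sub>R \<delta> X) (elast mu lam (E X + \<epsilon> *\<^sub>R \<delta> X)))
       = (\<lambda>X. a X + (\<epsilon> * 2) * ddot (\<delta> X) (elast mu lam (E X)) + \<epsilon>^2 * ddot (\<delta> X) (elast mu lam (\<delta> X)))"
      by (rule ext) (simp add: a_def sq algebra_simps)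
    then show ?thesis unfolding Ham_def
      using int_quad[of a \<Omega> "\<lambda>X. ddot (\<delta> X) (elast mu lam (E X))" "\<lambda>X. ddot (\<delta> X) (elast mu lam (\<delta> X))" "\<epsilon> * 2" "\<epsilon>^2"] ia ib ic
      by (simp add: a_def[abs_def] algebra_simps)
  qed
  have vi: "integral \<Omega> (\<lambda>X. ddot (elast mu lam (E X)) (\<delta> X)) = (1/2) * (2 * integral \<Omega> (\<lambda>X. ddot (\<delta> X) (elast mu lam (E X))))"
    by (simp add: ddot_commute)
  show ?thesis unfolding eq vi by (rule quad_deriv)
qed

lemma vd_F_gen:
  "((\<lambda>\<epsilon>. Ham rho0 mu lam \<Omega> p E (\<lambda>X. F X + \<epsilon> *\<^sub>R \<delta> X)) has_real_derivative
           integral \<Omega> (\<lambda>X. ddot ((\<lambda>Y. 0) X) (\<delta> X))) (at 0)"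
  unfolding Ham_def by simp



context
  fixes u :: "real^3 \<Rightarrow> real \<Rightarrow> real^3" and W and S :: "vec3 set" and t :: real
  assumes sm: "smooth_on W (\<lambda>(X, t). u X t)" and inS: "\<And>Y. Y \<in> S \<Longrightarrow> (Y, t) \<in> W"
begin

lemma G1: "continuous_on S (\<lambda>Y. dirs hs (\<lambda>(X, t). u X t) (Y, t))"
proof -
  have c: "continuous_on W (dirs hs (\<lambda>(X, t). u X t))" using sm unfolding smooth_on_def by blast
  show ?thesis
    by (rule continuous_on_compose2[OF c, of S "\<lambda>Y. (Y, t)"]) (auto intro!: continuous_intros inS)
qed

lemma cvel: "continuous_on S (\<lambda>Y. vel u Y t)"
  by (rule continuous_on_eq[OF G1[of "[(0, 1)]"]]) (simp add: E1[OF sm inS])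

lemma cdefg: "continuous_on S (\<lambda>Y. defgrad u Y t)"
  unfolding E3'[OF sm] by (intro continuous_intros G1)

lemma cgreen: "continuous_on S (\<lambda>Y. green u Y t)"
  unfolding green_def by (intro continuous_intros cdefg)

lemma cmom: "continuous_on S (\<lambda>Y. mom rho0 u Y t)"
  unfolding mom_def by (intro continuous_intros cvel)

end

lemma pw:
  assumes sm: "smooth_on W (\<lambda>(X, t). u X t)" and P: "(X, t) \<in> W"
    and bal: "rho0 *\<^sub>R tder (vel u X) t = Div (\<lambda>Y. defgrad u Y t ** PK2 mu lam u Y t) X"
  shows "(tder (mom rho0 u X) t, tder (green u X) t, tder (defgrad u X) t)
         = evalT (Jop (\<lambda>Y. defgrad u Y t) (\<lambda>Y. vel u Y t, \<lambda>Y. PK2 mu lam u Y t, \<lambda>Y. 0)) X"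
proof -
  have mv: "mom rho0 u X = (\<lambda>s. rho0 *\<^sub>R vel u X s)" by (rule ext) (simp add: mom_def)
  have d1: "tder (mom rho0 u X) t = rho0 *\<^sub>R tder (vel u X) t"
    unfolding tder_def mv
    using vector_derivative_at[OF hvd_scale[OF E2[OF sm P]]] vector_derivative_at[OF E2[OF sm P]] by simp
  have gv: "green u X = (\<lambda>s. (1/2) *\<^sub>R (transpose (defgrad u X s) ** defgrad u X s - mat 1))"
    by (rule ext) (simp add: green_def)
  have d2: "tder (green u X) t = aop (\<lambda>Y. defgrad u Y t) (\<lambda>Y. vel u Y t) X"
    unfolding tder_def gv aop_def
    by (rule vector_derivative_at[OF green_deriv[OF Fdot[OF sm P]]])
  have d3: "tder (defgrad u X) t = Grad (\<lambda>Y. vel u Y t) X"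
    unfolding tder_def by (rule vector_derivative_at[OF Fdot[OF sm P]])
  have d0: "Div (\<lambda>Y. 0::ten3) X = 0"
    by (simp add: Div_def pd_def dd_def vec_eq_iff)
  show ?thesis unfolding evalT_def Jop_def using d1 d2 d3 d0 bal by simp
qed

theorem theorem1:
  fixes \<Omega>0 :: "(real^3) set" and W :: "((real^3) \<times> real) set"
    and u :: "real^3 \<Rightarrow> real \<Rightarrow> real^3"
    and t0 te rho0 mu lam :: real
  assumes dom: "open \<Omega>0" "connected \<Omega>0" "bounded \<Omega>0" "\<Omega>0 \<noteq> {}"
    and tint: "t0 < te"
    and smooth: "closure \<Omega>0 \<times> {t0..te} \<subseteq> W" "smooth_on W (\<lambda>(X, t). u X t)"
    and rho: "rho0 > 0"
    and balance: "\<forall>X\<in>\<Omega>0. \<forall>t\<in>{t0..te}.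
        rho0 *\<^sub>R tder (vel u X) t = Div (\<lambda>Y. defgrad u Y t ** PK2 mu lam u Y t) X"
  shows "\<forall>t\<in>{t0..te}.
      is_vd_p \<Omega>0 (Ham rho0 mu lam \<Omega>0) (\<lambda>Y. mom rho0 u Y t) (\<lambda>Y. green u Y t) (\<lambda>Y. defgrad u Y t)
         (\<lambda>Y. vel u Y t)
    \<and> is_vd_E \<Omega>0 (Ham rho0 mu lam \<Omega>0) (\<lambda>Y. mom rho0 u Y t) (\<lambda>Y. green u Y t) (\<lambda>Y. defgrad u Y t)
         (\<lambda>Y. PK2 mu lam u Y t)
    \<and> is_vd_F \<Omega>0 (Ham rho0 mu lam \<Omega>0) (\<lambda>Y. mom rho0 u Y t) (\<lambda>Y. green u Y t) (\<lambda>Y. defgrad u Y t)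
         (\<lambda>Y. 0)
    \<and> (\<forall>X\<in>\<Omega>0.
         (tder (mom rho0 u X) t, tder (green u X) t, tder (defgrad u X) t)
         = evalT (Jop (\<lambda>Y. defgrad u Y t)
                   (\<lambda>Y. vel u Y t, \<lambda>Y. PK2 mu lam u Y t, \<lambda>Y. 0)) X)
    \<and> formally_skew_adjoint \<Omega>0 (Jop (\<lambda>Y. defgrad u Y t))"
proof
  fix t assume t: "t \<in> {t0..te}"
  have O: "open \<Omega>0" and bd: "bounded \<Omega>0" using dom by auto
  have inWc: "\<And>Y. Y \<in> closure \<Omega>0 \<Longrightarrow> (Y, t) \<in> W" using smooth(1) t by auto
  have inW: "\<And>Y. Y \<in> \<Omega>0 \<Longrightarrow> (Y, t) \<in> W" using inWc closure_subset by blast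
  have rho0: "rho0 \<noteq> 0" using rho by simp
  have cP: "continuous_on (closure \<Omega>0) (\<lambda>Y. mom rho0 u Y t)" by (rule cmom[OF smooth(2) inWc])
  have cE: "continuous_on (closure \<Omega>0) (\<lambda>Y. green u Y t)" by (rule cgreen[OF smooth(2) inWc])
  have ia: "(\<lambda>X. (1/rho0) * (mom rho0 u X t \<bullet> mom rho0 u X t) + ddot (green u X t) (elast mu lam (green u X t))) integrable_on \<Omega>0"
    by (rule INTC[OF O bd]) (intro continuous_intros cP cE)
  have vdp: "is_vd_p \<Omega>0 (Ham rho0 mu lam \<Omega>0) (\<lambda>Y. mom rho0 u Y t) (\<lambda>Y. green u Y t) (\<lambda>Y. defgrad u Y t)
         (\<lambda>Y. vel u Y t)"
    unfolding is_vd_p_def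
  proof (intro allI impI)
    fix \<delta> :: "vec3 \<Rightarrow> vec3" assume "test_field \<Omega>0 \<delta>"
    then have s\<delta>: "smooth_on UNIV \<delta>" unfolding test_field_def by blast
    have c\<delta>: "continuous_on (closure \<Omega>0) \<delta>" by (rule T2'[OF s\<delta>])
    show "((\<lambda>\<epsilon>. Ham rho0 mu lam \<Omega>0 (\<lambda>X. mom rho0 u X t + \<epsilon> *\<^sub>R \<delta> X) (\<lambda>Y. green u Y t) (\<lambda>Y. defgrad u Y t))
        has_real_derivative integral \<Omega>0 (\<lambda>X. vel u X t \<bullet> \<delta> X)) (at 0)"
    proof (rule vd_p_gen[OF rho0 _ ia])
      show "mom rho0 u X t = rho0 *\<^sub>R vel u X t" for X by (simp add: mom_def)
      show "(\<lambda>X. mom rho0 u X t \<bullet> \<delta> X) integrable_on \<Omega>0"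
        by (rule INTC[OF O bd]) (intro continuous_intros cP c\<delta>)
      show "(\<lambda>X. \<delta> X \<bullet> \<delta> X) integrable_on \<Omega>0"
        by (rule INTC[OF O bd]) (intro continuous_intros c\<delta>)
    qed
  qed
  have vdE: "is_vd_E \<Omega>0 (Ham rho0 mu lam \<Omega>0) (\<lambda>Y. mom rho0 u Y t) (\<lambda>Y. green u Y t) (\<lambda>Y. defgrad u Y t)
         (\<lambda>Y. PK2 mu lam u Y t)"
    unfolding is_vd_E_def PK2_def
  proof (intro allI impI)
    fix \<delta> :: "vec3 \<Rightarrow> ten3" assume "test_sym \<Omega>0 \<delta>"
    then have s\<delta>: "smooth_on UNIV \<delta>" unfolding test_sym_def test_field_def by blast
    have c\<delta>: "continuous_on (closure \<Omega>0) \<delta>" by (rule T2'[OF s\<delta>])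
    show "((\<lambda>\<epsilon>. Ham rho0 mu lam \<Omega>0 (\<lambda>Y. mom rho0 u Y t) (\<lambda>X. green u X t + \<epsilon> *\<^sub>R \<delta> X) (\<lambda>Y. defgrad u Y t))
        has_real_derivative integral \<Omega>0 (\<lambda>X. ddot (elast mu lam (green u X t)) (\<delta> X))) (at 0)"
    proof (rule vd_E_gen[OF ia])
      show "(\<lambda>X. ddot (\<delta> X) (elast mu lam (green u X t))) integrable_on \<Omega>0"
        by (rule INTC[OF O bd]) (intro continuous_intros cE c\<delta>)
      show "(\<lambda>X. ddot (\<delta> X) (elast mu lam (\<delta> X))) integrable_on \<Omega>0"
        by (rule INTC[OF O bd]) (intro continuous_intros c\<delta>)
    qed
  qed
  have vdF: "is_vd_F \<Omega>0 (Ham rho0 mu lam \<Omega>0) (\<lambda>Y. mom rho0 u Y t) (\<lambda>Y. green u Y t) (\<lambda>Y. defgrad u Y t)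
         (\<lambda>Y. 0)"
    unfolding is_vd_F_def by (intro allI impI vd_F_gen)
  have pt: "\<forall>X\<in>\<Omega>0.
         (tder (mom rho0 u X) t, tder (green u X) t, tder (defgrad u X) t)
         = evalT (Jop (\<lambda>Y. defgrad u Y t)
                   (\<lambda>Y. vel u Y t, \<lambda>Y. PK2 mu lam u Y t, \<lambda>Y. 0)) X"
  proof
    fix X assume X: "X \<in> \<Omega>0"
    show "(tder (mom rho0 u X) t, tder (green u X) t, tder (defgrad u X) t)
         = evalT (Jop (\<lambda>Y. defgrad u Y t) (\<lambda>Y. vel u Y t, \<lambda>Y. PK2 mu lam u Y t, \<lambda>Y. 0)) X"
      by (rule pw[OF smooth(2) inW[OF X]]) (use balance X t in blast)
  qed
  have sk: "formally_skew_adjoint \<Omega>0 (Jop (\<lambda>Y. defgrad u Y t))"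
    unfolding formally_skew_adjoint_def
    using skew[OF smooth(2) O bd inW] by blast
  show "is_vd_p \<Omega>0 (Ham rho0 mu lam \<Omega>0) (\<lambda>Y. mom rho0 u Y t) (\<lambda>Y. green u Y t) (\<lambda>Y. defgrad u Y t)
         (\<lambda>Y. vel u Y t)
    \<and> is_vd_E \<Omega>0 (Ham rho0 mu lam \<Omega>0) (\<lambda>Y. mom rho0 u Y t) (\<lambda>Y. green u Y t) (\<lambda>Y. defgrad u Y t)
         (\<lambda>Y. PK2 mu lam u Y t)
    \<and> is_vd_F \<Omega>0 (Ham rho0 mu lam \<Omega>0) (\<lambda>Y. mom rho0 u Y t) (\<lambda>Y. green u Y t) (\<lambda>Y. defgrad u Y t)
         (\<lambda>Y. 0)
    \<and> (\<forall>X\<in>\<Omega>0.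
         (tder (mom rho0 u X) t, tder (green u X) t, tder (defgrad u X) t)
         = evalT (Jop (\<lambda>Y. defgrad u Y t)
                   (\<lambda>Y. vel u Y t, \<lambda>Y. PK2 mu lam u Y t, \<lambda>Y. 0)) X)
    \<and> formally_skew_adjoint \<Omega>0 (Jop (\<lambda>Y. defgrad u Y t))"
    using vdp vdE vdF pt sk by blast
qed



end
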